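(* Consider a stochastic $K$-armed bandit ($K\ge2$) with reward distributions supported on $[0,1]$ and means $\mu_1\ge\cdots\ge\mu_K$, run with KL-MS for $T$ rounds. Let $a$ be a suboptimal arm and $\varepsilon_2\in(0,\Delta_a)$. Let $m\le n$ with $m,n\in\mathbb N\cup\{\infty\}$. Then \[ \mathbb E\Big[\sum_{t=K+1}^T\mathbf 1\big\{I_t=a,\ \hat\mu_{t-1,\max}<\mu_1-\varepsilon_2,\ m<N_{t-1,1}\le n\big\}\Big]\le\sum_{k=m+1}^n\Big(\frac{2H}{k}+1\Big)\exp\big(-k\,\mathsf{kl}(\mu_1-\varepsilon_2,\mu_1)\big), \] where $H=\dfrac{1}{(\mu_1-\varepsilon_2)(1-\mu_1+\varepsilon_2)\,h(\mu_1,\varepsilon_2)^2}$ and $h(\mu_1,\varepsilon_2)=\ln\dfrac{(1-\mu_1+\varepsilon_2)\mu_1}{(1-\mu_1)(\mu_1-\varepsilon_2)}$.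
   Context: Bandit model: arm $i\in[K]$ has reward distribution $\nu_i$ on $[0,1]$ with mean $\mu_i$, indexed so $\mu_1\ge\cdots\ge\mu_K$. At round $t$ the learner picks $I_t$ and observes $y_t\sim\nu_{I_t}$ independently of the past given $I_t$. $N_{t,a}$ = number of pulls of arm $a$ in rounds $1..t$; $\hat\mu_{t,a}$ = empirical mean of arm $a$'s rewards up to round $t$; $\hat\mu_{t,\max}=\max_a\hat\mu_{t,a}$; $\Delta_a=\mu_1-\mu_a$. $\mathsf{kl}(p,q)=p\ln\frac pq+(1-p)\ln\frac{1-p}{1-q}$. KL-MS: for $t\le K$ pull arm $t$; for $t\ge K+1$ pull $I_t\sim p_t$ with $p_{t,a}\propto\exp(-N_{t-1,a}\,\mathsf{kl}(\hat\mu_{t-1,a},\hat\mu_{t-1,\max}))$. *)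

theory Defs
  imports "HOL-Probability.Probability"
begin

definition kl :: "real \<Rightarrow> real \<Rightarrow> ereal" where
  "kl p q = (if (0 < p \<and> q \<le> 0) \<or> (p < 1 \<and> 1 \<le> q) then \<infinity>
     else ereal ((if p = 0 then 0 else p * ln (p / q))
               + (if p = 1 then 0 else (1 - p) * ln ((1 - p) / (1 - q)))))"

definition exp_neg :: "real \<Rightarrow> ereal \<Rightarrow> real" where
  "exp_neg c d = (if d = \<infinity> then 0 else exp (- c * real_of_ereal d))"

text \<open>Learner state after some rounds: N a = number of pulls of arm a, S a = sum of its rewards.\<close>
definition emp_mean :: "(nat \<Rightarrow> nat) \<Rightarrow> (nat \<Rightarrow> real) \<Rightarrow> nat \<Rightarrow> real" where
  "emp_mean N S b = S b / real (N b)"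

definition emp_max :: "nat \<Rightarrow> (nat \<Rightarrow> nat) \<Rightarrow> (nat \<Rightarrow> real) \<Rightarrow> real" where
  "emp_max K N S = Max (emp_mean N S ` {1..K})"

definition klms_weight :: "nat \<Rightarrow> (nat \<Rightarrow> nat) \<Rightarrow> (nat \<Rightarrow> real) \<Rightarrow> nat \<Rightarrow> real" where
  "klms_weight K N S b = exp_neg (real (N b)) (kl (emp_mean N S b) (emp_max K N S))"

text \<open>Arm chosen at round t given the state after t-1 rounds and a uniform [0,1] variate u:
  arm t for t \<le> K, otherwise a sample from p_t by inverse-CDF on u.\<close>
definition klms_choose :: "nat \<Rightarrow> nat \<Rightarrow> (nat \<Rightarrow> nat) \<Rightarrow> (nat \<Rightarrow> real) \<Rightarrow> real \<Rightarrow> nat" where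
  "klms_choose K t N S u = (if t \<le> K then t else
     (let w = klms_weight K N S; tot = (\<Sum>b\<in>{1..K}. w b) in
      LEAST a. 1 \<le> a \<and> (u * tot < (\<Sum>b\<in>{1..a}. w b) \<or> a = K)))"

text \<open>Reward-table model: X (a, s) is the reward of the (s+1)-th pull of arm a,
  U t is the uniform variate used for the learner's randomisation at round t.\<close>
primrec klms_hist :: "nat \<Rightarrow> (nat \<times> nat \<Rightarrow> real) \<Rightarrow> (nat \<Rightarrow> real) \<Rightarrow> nat
    \<Rightarrow> (nat \<Rightarrow> nat) \<times> (nat \<Rightarrow> real)" where
  "klms_hist K X U 0 = (\<lambda>_. 0, \<lambda>_. 0)"
| "klms_hist K X U (Suc t) = (case klms_hist K X U t of (N, S) \<Rightarrow>
     (let a = klms_choose K (Suc t) N S (U (Suc t))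
      in (N(a := Suc (N a)), S(a := S a + X (a, N a)))))"

definition klms_arm :: "nat \<Rightarrow> (nat \<times> nat \<Rightarrow> real) \<Rightarrow> (nat \<Rightarrow> real) \<Rightarrow> nat \<Rightarrow> nat" where
  "klms_arm K X U t = (case klms_hist K X U (t - 1) of (N, S) \<Rightarrow> klms_choose K t N S (U t))"

definition bandit_space :: "nat \<Rightarrow> (nat \<Rightarrow> real measure)
    \<Rightarrow> ((nat \<times> nat \<Rightarrow> real) \<times> (nat \<Rightarrow> real)) measure" where
  "bandit_space K \<nu> =
     (\<Pi>\<^sub>M p\<in>UNIV. if fst p \<in> {1..K} then \<nu> (fst p) else return borel 0)
     \<Otimes>\<^sub>M (\<Pi>\<^sub>M t\<in>UNIV. uniform_measure lborel {0..1})"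

definition h_fun :: "real \<Rightarrow> real \<Rightarrow> real" where
  "h_fun \<mu>1 \<epsilon> = ln (((1 - \<mu>1 + \<epsilon>) * \<mu>1) / ((1 - \<mu>1) * (\<mu>1 - \<epsilon>)))"

definition H_const :: "real \<Rightarrow> real \<Rightarrow> real" where
  "H_const \<mu>1 \<epsilon> = 1 / ((\<mu>1 - \<epsilon>) * (1 - \<mu>1 + \<epsilon>) * (h_fun \<mu>1 \<epsilon>)\<^sup>2)"

end

theory Submission
  imports Defs "HOL-Real_Asymp.Real_Asymp"
begin

definition klr :: "real \<Rightarrow> real \<Rightarrow> real" where
  "klr p q = p * ln (p / q) + (1 - p) * ln ((1 - p) / (1 - q))"

lemma kl_eq_klr:
  assumes "0 \<le> p" "p \<le> q" "q < 1"
  shows "kl p q = ereal (klr p q)"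
proof -
  have "\<not> ((0 < p \<and> q \<le> 0) \<or> (p < 1 \<and> 1 \<le> q))" using assms by auto
  then show ?thesis unfolding kl_def klr_def by auto
qed

lemma kl_eq_klr2:
  assumes "0 \<le> p" "p \<le> 1" "0 < q" "q < 1"
  shows "kl p q = ereal (klr p q)"
proof -
  have "\<not> ((0 < p \<and> q \<le> 0) \<or> (p < 1 \<and> 1 \<le> q))" using assms by auto
  then show ?thesis unfolding kl_def klr_def by auto
qed

lemma ln_ge_1_minus_inv: "0 < t \<Longrightarrow> 1 - 1 / t \<le> ln (t::real)"
proof -
  assume t: "0 < t"
  have "ln (1/t) \<le> 1/t - 1" using t by (intro ln_le_minus_one) auto
  then show ?thesis using t by (simp add: ln_div)
qed

lemma klr_nonneg:
  assumes "0 \<le> p" "p \<le> 1" "0 < q" "q < 1"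
  shows "0 \<le> klr p q"
proof -
  have a: "p * ln (p / q) \<ge> p - q"
  proof (cases "p = 0")
    case True then show ?thesis using assms by simp
  next
    case False
    then have "ln (p/q) \<ge> 1 - 1/(p/q)" using assms by (intro ln_ge_1_minus_inv) auto
    then have "p * ln (p/q) \<ge> p * (1 - q/p)" using assms by (intro mult_left_mono) auto
    moreover have "p * (1 - q/p) = p - q" using False by (simp add: field_simps)
    ultimately show ?thesis by linarith
  qed
  have b: "(1 - p) * ln ((1 - p) / (1 - q)) \<ge> q - p"
  proof (cases "p = 1")
    case True then show ?thesis using assms by simp
  next
    case False
    then have "ln ((1-p)/(1-q)) \<ge> 1 - 1/((1-p)/(1-q))" using assms by (intro ln_ge_1_minus_inv) auto
    then have "(1-p) * ln ((1-p)/(1-q)) \<ge> (1-p) * (1 - (1-q)/(1-p))" using assms by (intro mult_left_mono) auto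
    moreover have "(1-p) * (1 - (1-q)/(1-p)) = q - p" using False by (simp add: field_simps)
    ultimately show ?thesis by linarith
  qed
  show ?thesis using a b unfolding klr_def by simp
qed

lemma klr_chi2:
  assumes "0 \<le> z" "z \<le> 1" "0 < x" "x < 1"
  shows "klr z x \<le> (x - z)^2 / (x * (1 - x))"
proof -
  have a: "z * ln (z / x) \<le> z * (z / x - 1)"
  proof (cases "z = 0")
    case True then show ?thesis by simp
  next
    case False
    then show ?thesis using assms by (intro mult_left_mono ln_le_minus_one) auto
  qed
  have b: "(1 - z) * ln ((1 - z) / (1 - x)) \<le> (1 - z) * ((1 - z) / (1 - x) - 1)"
  proof (cases "z = 1")
    case True then show ?thesis by simp
  next
    case False
    then show ?thesis using assms by (intro mult_left_mono ln_le_minus_one) auto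
  qed
  have c: "z * (z / x - 1) + (1 - z) * ((1 - z) / (1 - x) - 1) = (x - z)^2 / (x * (1 - x))"
    using assms by (simp add: field_simps power2_eq_square)
  show ?thesis using a b c unfolding klr_def by linarith
qed

lemma klr_diff_q:
  assumes "0 \<le> p" "p \<le> 1" "0 < q" "q < 1" "0 < q'" "q' < 1"
  shows "klr p q' - klr p q = p * ln (q / q') + (1 - p) * ln ((1 - q) / (1 - q'))"
proof -
  have a: "p * ln (p / q') - p * ln (p / q) = p * ln (q / q')"
  proof (cases "p = 0")
    case True then show ?thesis by simp
  next
    case False then show ?thesis using assms by (simp add: ln_div right_diff_distrib)
  qed
  have b: "(1-p) * ln ((1-p) / (1-q')) - (1-p) * ln ((1-p) / (1-q)) = (1-p) * ln ((1-q) / (1-q'))"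
  proof (cases "p = 1")
    case True then show ?thesis by simp
  next
    case False then show ?thesis using assms by (simp add: ln_div right_diff_distrib)
  qed
  show ?thesis using a b unfolding klr_def by linarith
qed

lemma klr_mono_q:
  assumes "0 \<le> p" "p \<le> q" "q \<le> q'" "q' < 1" "0 < q"
  shows "klr p q \<le> klr p q'"
proof -
  have d: "klr p q' - klr p q = p * ln (q / q') + (1 - p) * ln ((1 - q) / (1 - q'))"
    using assms by (intro klr_diff_q) auto
  have dq: "klr q q' - klr q q = q * ln (q / q') + (1 - q) * ln ((1 - q) / (1 - q'))"
    using assms by (intro klr_diff_q) auto
  have qq: "klr q q = 0" unfolding klr_def using assms by simp
  have l1: "ln (q / q') \<le> 0" using assms by (subst ln_le_zero_iff) (auto simp: divide_le_eq_1)
  have l2: "ln ((1 - q) / (1 - q')) \<ge> 0" using assms by (subst ln_ge_zero_iff) (auto simp: le_divide_eq_1)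
  have "p * ln (q / q') + (1 - p) * ln ((1 - q) / (1 - q'))
        - (q * ln (q / q') + (1 - q) * ln ((1 - q) / (1 - q')))
        = (q - p) * (ln ((1 - q) / (1 - q')) - ln (q / q'))" by (simp add: algebra_simps)
  also have "\<dots> \<ge> 0" by (rule mult_nonneg_nonneg) (use assms l1 l2 in linarith)+
  finally have "klr p q' - klr p q \<ge> klr q q' - klr q q" using d dq by linarith
  moreover have "klr q q' \<ge> 0" using assms by (intro klr_nonneg) auto
  ultimately show ?thesis using qq by linarith
qed

lemma klr_anti_p:
  assumes "0 \<le> z1" "z1 \<le> z2" "z2 \<le> x" "x < 1" "0 < z2"
  shows "klr z2 x \<le> klr z1 x"
proof -
  have d: "klr z1 x - klr z1 z2 = z1 * ln (z2 / x) + (1 - z1) * ln ((1 - z2) / (1 - x))"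
    using assms by (intro klr_diff_q) auto
  have d2: "klr z2 x - klr z2 z2 = z2 * ln (z2 / x) + (1 - z2) * ln ((1 - z2) / (1 - x))"
    using assms by (intro klr_diff_q) auto
  have qq: "klr z2 z2 = 0" unfolding klr_def using assms by simp
  have l1: "ln (z2 / x) \<le> 0" using assms by (subst ln_le_zero_iff) (auto simp: divide_le_eq_1)
  have l2: "ln ((1 - z2) / (1 - x)) \<ge> 0" using assms by (subst ln_ge_zero_iff) (auto simp: le_divide_eq_1)
  have "z1 * ln (z2 / x) + (1 - z1) * ln ((1 - z2) / (1 - x))
       - (z2 * ln (z2 / x) + (1 - z2) * ln ((1 - z2) / (1 - x)))
       = (z2 - z1) * (ln ((1 - z2) / (1 - x)) - ln (z2 / x))" by (simp add: algebra_simps)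
  also have "\<dots> \<ge> 0" by (rule mult_nonneg_nonneg) (use assms l1 l2 in linarith)+
  finally have "klr z1 x - klr z1 z2 \<ge> klr z2 x" using d d2 qq by linarith
  moreover have "klr z1 z2 \<ge> 0" using assms by (intro klr_nonneg) auto
  ultimately show ?thesis by linarith
qed

lemma klr_decomp:
  assumes "0 \<le> z" "z \<le> 1" "0 < x" "x < 1" "0 < \<mu>" "\<mu> < 1"
  shows "klr z \<mu> = klr z x + klr x \<mu> + ln ((1 - x) * \<mu> / ((1 - \<mu>) * x)) * (x - z)"
proof -
  have d: "klr z \<mu> - klr z x = z * ln (x / \<mu>) + (1 - z) * ln ((1 - x) / (1 - \<mu>))"
    using assms by (intro klr_diff_q) auto
  have e: "klr x \<mu> = x * ln (x / \<mu>) + (1 - x) * ln ((1 - x) / (1 - \<mu>))" unfolding klr_def ..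
  have f0: "(1 - x) * \<mu> / ((1 - \<mu>) * x) = ((1 - x) / (1 - \<mu>)) / (x / \<mu>)"
    using assms by (simp add: field_simps)
  have f: "ln ((1 - x) * \<mu> / ((1 - \<mu>) * x)) = ln ((1 - x) / (1 - \<mu>)) - ln (x / \<mu>)"
    unfolding f0 using assms by (simp add: ln_div ln_mult)
  have g: "\<And>kzm kzx kxm A B :: real. kzm - kzx = z*B + (1-z)*A \<Longrightarrow> kxm = x*B + (1-x)*A
     \<Longrightarrow> kzm = kzx + kxm + (A - B)*(x-z)" by (simp add: algebra_simps)
  show ?thesis unfolding f by (rule g[OF d e])
qed

lemma xlnx_tendsto: "((\<lambda>z::real. z * ln z) \<longlongrightarrow> 0) (at_right 0)"
  by real_asymp

lemma klr_cont:
  assumes "0 < x" "x < 1"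
  shows "continuous_on {0..x} (\<lambda>z. klr z x)"
proof -
  have c1: "continuous_on {0..x} (\<lambda>z. (1 - z) * ln ((1 - z) / (1 - x)))"
  proof (intro continuous_intros ballI)
    fix z assume "z \<in> {0..x}"
    then show "(1 - z) / (1 - x) \<noteq> 0" using assms by auto
  qed (use assms in auto)
  have lim0: "((\<lambda>z. z * ln (z / x)) \<longlongrightarrow> 0) (at_right 0)"
  proof -
    have "((\<lambda>z. z * ln z - z * ln x) \<longlongrightarrow> 0 - 0 * ln x) (at_right 0)"
      by (intro tendsto_intros xlnx_tendsto)
    then have *: "((\<lambda>z. z * ln z - z * ln x) \<longlongrightarrow> 0) (at_right 0)" by simp
    have "eventually (\<lambda>w. w * ln w - w * ln x = w * ln (w / x)) (at_right 0)"
      unfolding eventually_at_right_field using assms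
      by (intro exI[of _ 1]) (auto simp: ln_div right_diff_distrib)
    from tendsto_cong[OF this] * show ?thesis by simp
  qed
  have c2: "continuous_on {0..x} (\<lambda>z::real. z * ln (z / x))"
    unfolding continuous_on_eq_continuous_within
  proof
    fix z assume z: "z \<in> {0..x}"
    show "continuous (at z within {0..x}) (\<lambda>z. z * ln (z / x))"
    proof (cases "z = 0")
      case False
      then have "isCont (\<lambda>z. z * ln (z / x)) z" using z assms by (intro continuous_intros) auto
      then show ?thesis by (rule continuous_at_imp_continuous_at_within)
    next
      case True
      have "((\<lambda>z. z * ln (z / x)) \<longlongrightarrow> 0) (at 0 within {0..x})"
      proof -
        have "at 0 within {0..x} \<le> at_right (0::real)"
          unfolding at_within_def by (intro inf_mono) auto
        then show ?thesis using lim0 by (rule tendsto_mono)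
      qed
      then show ?thesis using True unfolding continuous_within by simp
    qed
  qed
  show ?thesis unfolding klr_def by (intro continuous_on_add c1 c2)
qed

lemma sqrt_exp_deriv:
  fixes c v :: real
  assumes "0 < v" "c \<noteq> 0"
  shows "((\<lambda>v. -(2/c^2) * (1 + c * sqrt v) * exp (-c * sqrt v)) has_real_derivative exp (-c * sqrt v)) (at v)"
proof -
  define \<phi> where "\<phi> = (\<lambda>s::real. -(2/c^2) * (1 + c * s) * exp (-c * s))"
  have d1: "(\<phi> has_real_derivative (2 * sqrt v * exp (-c * sqrt v))) (at (sqrt v))"
    unfolding \<phi>_def using assms by (auto intro!: derivative_eq_intros simp: field_simps power2_eq_square)
  have d2: "(sqrt has_real_derivative inverse (sqrt v) / 2) (at v)" using assms by (intro DERIV_real_sqrt) auto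
  have eq: "(2 * sqrt v * exp (-c * sqrt v)) * (inverse (sqrt v) / 2) = exp (-c * sqrt v)"
    using assms by (simp add: field_simps)
  have "((\<phi> \<circ> sqrt) has_real_derivative exp (-c * sqrt v)) (at v)"
    using DERIV_chain[OF d1 d2] by (simp only: eq)
  moreover have "(\<phi> \<circ> sqrt) = (\<lambda>v. -(2/c^2) * (1 + c * sqrt v) * exp (-c * sqrt v))"
    by (simp add: fun_eq_iff \<phi>_def)
  ultimately show ?thesis by simp
qed

lemma exp_sqrt_integral:
  fixes c :: real
  assumes c: "0 < c"
  shows "(\<integral>\<^sup>+v. ennreal (exp (-c * sqrt v)) * indicator {0..} v \<partial>lborel) \<le> ennreal (2 / c^2)"
proof -
  define F where "F = (\<lambda>v::real. -(2/c^2) * (1 + c * sqrt v) * exp (-c * sqrt v))"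
  have F0: "F 0 = -(2/c^2)" unfolding F_def by simp
  have Fle: "F b \<le> 0" if "0 \<le> b" for b
    unfolding F_def using c that by (intro mult_nonpos_nonneg) (auto intro!: mult_nonpos_nonneg)
  define f where "f = (\<lambda>n::nat. \<lambda>v::real. ennreal (indicator {0..real n} v * exp (-c * sqrt v)))"
  have fint: "integral\<^sup>N lborel (f n) = ennreal (F (real n) - F 0)" for n
  proof -
    have "((\<lambda>v. exp (-c * sqrt v)) has_integral F (real n) - F 0) {0..real n}"
    proof (rule fundamental_theorem_of_calculus_interior)
      show "continuous_on {0..real n} F" unfolding F_def by (intro continuous_intros)
      fix v assume "v \<in> {0<..<real n}"
      then have "(F has_real_derivative exp (-c * sqrt v)) (at v)"
        unfolding F_def using c by (intro sqrt_exp_deriv) auto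
      then show "(F has_vector_derivative exp (-c * sqrt v)) (at v)"
        by (simp add: has_real_derivative_iff_has_vector_derivative)
    qed simp
    then show ?thesis unfolding f_def by (intro nn_integral_has_integral_lebesgue) auto
  qed
  have "(\<integral>\<^sup>+v. ennreal (exp (-c * sqrt v)) * indicator {0..} v \<partial>lborel) \<le> (\<integral>\<^sup>+v. (SUP n. f n v) \<partial>lborel)"
  proof (intro nn_integral_mono)
    fix v :: real
    show "ennreal (exp (-c * sqrt v)) * indicator {0..} v \<le> (SUP n. f n v)"
    proof (cases "0 \<le> v")
      case True
      have "f (nat \<lceil>v\<rceil>) v = ennreal (exp (-c * sqrt v))"
        unfolding f_def using True by (auto simp: indicator_def)
      then have "ennreal (exp (-c * sqrt v)) \<le> (SUP n. f n v)" by (metis SUP_upper UNIV_I)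
      then show ?thesis using True by simp
    qed simp
  qed
  also have "\<dots> = (SUP n. integral\<^sup>N lborel (f n))"
  proof (rule nn_integral_monotone_convergence_SUP)
    show "incseq f"
      unfolding f_def by (intro monoI le_funI ennreal_leI) (auto simp: indicator_def)
  qed (simp add: f_def)
  also have "\<dots> \<le> ennreal (2 / c^2)"
  proof (rule SUP_least)
    fix n
    have "F (real n) - F 0 \<le> 2 / c^2" using Fle[of "real n"] F0 by simp
    then show "integral\<^sup>N lborel (f n) \<le> ennreal (2 / c^2)" unfolding fint by (rule ennreal_leI)
  qed
  finally show ?thesis .
qed

lemma exp_lin_bound:
  fixes x l :: real
  assumes "0 \<le> x" "x \<le> 1"
  shows "exp (- l * x) \<le> 1 - x + x * exp (- l)"
proof -
  have "exp ((1 - x) *\<^sub>R 0 + x *\<^sub>R (- l)) \<le> (1 - x) * exp 0 + x * exp (- l)"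
    using assms by (intro convex_onD[OF exp_convex]) auto
  then show ?thesis by (simp add: mult.commute)
qed

locale arm_dist =
  fixes M :: "real measure" and \<mu> :: real
  assumes prob: "prob_space M"
    and sets_M: "sets M = sets borel"
    and AE01: "AE x in M. x \<in> {0..1}"
    and mean: "\<mu> = (\<integral>x. x \<partial>M)"
begin

interpretation M: prob_space M by (rule prob)

lemma meas_borel: "f \<in> borel_measurable M \<longleftrightarrow> f \<in> borel_measurable borel"
proof -
  have e: "measurable M borel = measurable borel borel" by (rule measurable_cong_sets[OF sets_M refl])
  show ?thesis by (simp add: e)
qed

lemma meas_id: "(\<lambda>x. x) \<in> borel_measurable M"
  by (simp add: meas_borel)

lemma integrable_id: "integrable M (\<lambda>x. x)"
proof (rule M.integrable_const_bound[where B=1])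
  show "AE x in M. norm x \<le> 1" using AE01 by eventually_elim auto
qed (rule meas_id)

lemma mu_01: "0 \<le> \<mu>" "\<mu> \<le> 1"
proof -
  have "0 \<le> (\<integral>x. x \<partial>M)" using AE01 by (intro integral_nonneg_AE) (auto elim: AE_mp)
  then show "0 \<le> \<mu>" using mean by simp
  have "(\<integral>x. x \<partial>M) \<le> (\<integral>x. 1 \<partial>M)"
    using AE01 by (intro integral_mono_AE integrable_id) (auto elim: AE_mp)
  then show "\<mu> \<le> 1" using mean M.prob_space by simp
qed

lemma mgf1: "(\<integral>\<^sup>+x. ennreal (exp (- l * x)) \<partial>M) \<le> ennreal (1 - \<mu> + \<mu> * exp (- l))"
proof -
  have "(\<integral>\<^sup>+x. ennreal (exp (- l * x)) \<partial>M) \<le> (\<integral>\<^sup>+x. ennreal (1 - x + x * exp (- l)) \<partial>M)"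
    using AE01
  proof (intro nn_integral_mono_AE, eventually_elim)
    fix x :: real assume "x \<in> {0..1}"
    then show "ennreal (exp (- l * x)) \<le> ennreal (1 - x + x * exp (- l))"
      by (intro ennreal_leI exp_lin_bound) auto
  qed
  also have "\<dots> = ennreal (\<integral>x. 1 - x + x * exp (- l) \<partial>M)"
  proof (rule nn_integral_eq_integral)
    show "integrable M (\<lambda>x. 1 - x + x * exp (- l))"
      using integrable_id by auto
    show "AE x in M. 0 \<le> 1 - x + x * exp (- l)"
      using AE01 by eventually_elim auto
  qed
  also have "(\<integral>x. 1 - x + x * exp (- l) \<partial>M) = 1 - \<mu> + \<mu> * exp (- l)"
    using integrable_id mean by (simp add: M.prob_space)
  finally show ?thesis .
qed

definition Q :: "nat \<Rightarrow> (nat \<Rightarrow> real) measure" where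
  "Q k = PiM {..<k} (\<lambda>_. M)"

lemma Q_prob: "prob_space (Q k)"
  unfolding Q_def by (intro prob_space_PiM prob)

lemma comp_meas[measurable]: "s \<in> {..<k} \<Longrightarrow> (\<lambda>\<omega>. \<omega> s) \<in> borel_measurable (Q k)"
  unfolding Q_def using measurable_component_singleton[of s "{..<k}" "\<lambda>_. M"]
  by (simp add: measurable_cong_sets[OF refl sets_M])

lemma sum_meas[measurable]: "(\<lambda>\<omega>. \<Sum>s<k. \<omega> s) \<in> borel_measurable (Q k)"
  by (intro borel_measurable_sum comp_meas) auto

lemma mgf: "(\<integral>\<^sup>+\<omega>. ennreal (exp (- l * (\<Sum>s<k. \<omega> s))) \<partial>Q k) \<le> ennreal ((1 - \<mu> + \<mu> * exp (- l)) ^ k)"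
proof -
  interpret PS: product_sigma_finite "\<lambda>_. M"
    unfolding product_sigma_finite_def using M.sigma_finite_measure_axioms by simp
  have "(\<integral>\<^sup>+\<omega>. ennreal (exp (- l * (\<Sum>s<k. \<omega> s))) \<partial>Q k)
      = (\<integral>\<^sup>+\<omega>. (\<Prod>s\<in>{..<k}. ennreal (exp (- l * \<omega> s))) \<partial>Q k)"
    by (simp add: sum_distrib_left exp_sum prod_ennreal)
  also have "\<dots> = (\<Prod>s\<in>{..<k}. (\<integral>\<^sup>+x. ennreal (exp (- l * x)) \<partial>M))"
    unfolding Q_def
    by (rule PS.product_nn_integral_prod) (auto simp: meas_borel)
  also have "\<dots> \<le> (\<Prod>s\<in>{..<k}. ennreal (1 - \<mu> + \<mu> * exp (- l)))"
    by (intro prod_mono_ennreal mgf1)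
  also have "\<dots> = ennreal ((1 - \<mu> + \<mu> * exp (- l)) ^ k)"
    using mu_01 by (subst prod_ennreal) (auto intro!: add_nonneg_nonneg)
  finally show ?thesis .
qed

lemma chernoff:
  fixes z :: real
  assumes "0 \<le> l"
  shows "emeasure (Q k) {\<omega> \<in> space (Q k). (\<Sum>s<k. \<omega> s) \<le> k * z}
     \<le> ennreal (exp (l * k * z) * (1 - \<mu> + \<mu> * exp (- l)) ^ k)"
proof -
  have "emeasure (Q k) {\<omega> \<in> space (Q k). (\<Sum>s<k. \<omega> s) \<le> k * z}
      = (\<integral>\<^sup>+\<omega>. indicator {\<omega> \<in> space (Q k). (\<Sum>s<k. \<omega> s) \<le> k * z} \<omega> \<partial>Q k)"
    by (rule nn_integral_indicator[symmetric]) measurable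
  also have "\<dots> \<le> (\<integral>\<^sup>+\<omega>. ennreal (exp (l * k * z)) * ennreal (exp (- l * (\<Sum>s<k. \<omega> s))) \<partial>Q k)"
  proof (intro nn_integral_mono)
    fix \<omega> assume "\<omega> \<in> space (Q k)"
    show "indicator {\<omega> \<in> space (Q k). (\<Sum>s<k. \<omega> s) \<le> k * z} \<omega>
        \<le> ennreal (exp (l * k * z)) * ennreal (exp (- l * (\<Sum>s<k. \<omega> s)))"
    proof (cases "(\<Sum>s<k. \<omega> s) \<le> k * z")
      case True
      then have "l * (\<Sum>s<k. \<omega> s) \<le> l * (k * z)" using assms by (intro mult_left_mono)
      then have "1 \<le> exp (l * k * z) * exp (- l * (\<Sum>s<k. \<omega> s))"
        by (simp add: exp_add[symmetric] mult.assoc)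
      then show ?thesis by (simp add: ennreal_mult''[symmetric] indicator_def)
    qed (simp add: indicator_def)
  qed
  also have "\<dots> = ennreal (exp (l * k * z)) * (\<integral>\<^sup>+\<omega>. ennreal (exp (- l * (\<Sum>s<k. \<omega> s))) \<partial>Q k)"
    by (rule nn_integral_cmult) measurable
  also have "\<dots> \<le> ennreal (exp (l * k * z)) * ennreal ((1 - \<mu> + \<mu> * exp (- l)) ^ k)"
    by (intro mult_left_mono mgf) auto
  also have "\<dots> = ennreal (exp (l * k * z) * (1 - \<mu> + \<mu> * exp (- l)) ^ k)"
  proof -
    have "0 \<le> (1 - \<mu> + \<mu> * exp (- l)) ^ k" using mu_01 by (intro zero_le_power add_nonneg_nonneg) auto
    then show ?thesis by (simp add: ennreal_mult[symmetric])
  qed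
  finally show ?thesis .
qed


lemma chernoff_kl:
  assumes "\<mu> < 1" "0 < z" "z \<le> \<mu>"
  shows "emeasure (Q k) {\<omega> \<in> space (Q k). (\<Sum>s<k. \<omega> s) \<le> k * z} \<le> ennreal (exp (- real k * klr z \<mu>))"
proof -
  have z1: "z < 1" using assms by simp
  define l where "l = ln (\<mu> * (1 - z) / (z * (1 - \<mu>)))"
  have pos: "0 < \<mu> * (1 - z) / (z * (1 - \<mu>))" using assms z1 by (intro divide_pos_pos mult_pos_pos) auto
  have ge1: "1 \<le> \<mu> * (1 - z) / (z * (1 - \<mu>))"
    using assms z1 by (subst le_divide_eq_1) (auto intro!: mult_pos_pos simp: algebra_simps)
  have l0: "0 \<le> l" unfolding l_def using ge1 by simp
  have el: "exp (- l) = z * (1 - \<mu>) / (\<mu> * (1 - z))"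
    unfolding l_def using pos by (simp add: exp_minus)
  have base: "1 - \<mu> + \<mu> * exp (- l) = (1 - \<mu>) / (1 - z)"
    unfolding el using assms z1 by (simp add: field_simps)
  have pw: "((1 - \<mu>) / (1 - z)) ^ k = exp (k * ln ((1 - \<mu>) / (1 - z)))"
    using assms z1 by (simp add: exp_of_nat_mult)
  have a: "ln (\<mu> * (1 - z) / (z * (1 - \<mu>))) = ln \<mu> + ln (1-z) - ln z - ln (1-\<mu>)"
    using assms z1 by (simp add: ln_div ln_mult)
  have b: "ln ((1-\<mu>)/(1-z)) = ln (1-\<mu>) - ln (1-z)" using assms z1 by (simp add: ln_div)
  have c: "ln (z/\<mu>) = ln z - ln \<mu>" using assms z1 by (simp add: ln_div)
  have d: "ln ((1-z)/(1-\<mu>)) = ln (1-z) - ln (1-\<mu>)" using assms z1 by (simp add: ln_div)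
  have key: "l * z + ln ((1 - \<mu>) / (1 - z)) = - klr z \<mu>"
    unfolding l_def klr_def a b c d by (simp add: algebra_simps)
  have "exp (l * k * z) * (1 - \<mu> + \<mu> * exp (- l)) ^ k = exp (l * k * z + k * ln ((1 - \<mu>) / (1 - z)))"
    unfolding base pw by (simp add: exp_add)
  also have "l * k * z + k * ln ((1 - \<mu>) / (1 - z)) = k * (l * z + ln ((1 - \<mu>) / (1 - z)))"
    by (simp add: algebra_simps)
  also have "\<dots> = - real k * klr z \<mu>" unfolding key by simp
  finally have "exp (l * k * z) * (1 - \<mu> + \<mu> * exp (- l)) ^ k = exp (- real k * klr z \<mu>)" .
  with chernoff[OF l0, of k z] show ?thesis by simp
qed

lemma chernoff_one:
  fixes z :: real
  assumes "\<mu> = 1" "z < 1" "0 < k"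
  shows "emeasure (Q k) {\<omega> \<in> space (Q k). (\<Sum>s<k. \<omega> s) \<le> k * z} = 0"
proof -
  have "emeasure (Q k) {\<omega> \<in> space (Q k). (\<Sum>s<k. \<omega> s) \<le> k * z} \<le> 0"
  proof (rule ennreal_le_epsilon)
    fix e :: real assume e: "0 < e"
    define l where "l = \<bar>ln e\<bar> / (k * (1 - z))"
    have kz: "0 < real k * (1 - z)" using assms by simp
    have l0: "0 \<le> l" unfolding l_def using kz by simp
    have "exp (l * k * z) * (1 - \<mu> + \<mu> * exp (- l)) ^ k = exp (l * k * z) * exp (- l * k)"
      using assms by (simp add: exp_of_nat_mult[symmetric] mult.commute)
    also have "\<dots> = exp (- (l * (k * (1 - z))))" by (simp add: exp_add[symmetric] algebra_simps)
    also have "l * (k * (1 - z)) = \<bar>ln e\<bar>" unfolding l_def using kz by (metis nonzero_eq_divide_eq order_less_irrefl mult.commute)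
    also have "exp (- \<bar>ln e\<bar>) \<le> e"
    proof (cases "e \<le> 1")
      case True then show ?thesis using e by simp
    next
      case False
      then have "exp (- \<bar>ln e\<bar>) = 1 / e" using e by (simp add: exp_minus divide_inverse)
      moreover have "1 / e \<le> e" using False e by (simp add: divide_le_eq) (metis less_1_mult not_le order_less_imp_le)
      ultimately show ?thesis by simp
    qed
    finally have "exp (l * k * z) * (1 - \<mu> + \<mu> * exp (- l)) ^ k \<le> e" .
    then have "ennreal (exp (l * k * z) * (1 - \<mu> + \<mu> * exp (- l)) ^ k) \<le> 0 + ennreal e"
      by (simp add: ennreal_leI)
    with chernoff[OF l0, of k z] show "emeasure (Q k) {\<omega> \<in> space (Q k). (\<Sum>s<k. \<omega> s) \<le> k * z} \<le> 0 + ennreal e"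
      by (rule order_trans)
  qed
  then show ?thesis by simp
qed

end

lemma layer_exp:
  fixes G :: real
  assumes "0 \<le> G"
  shows "(\<integral>\<^sup>+v. (if 0 \<le> v \<and> v < G then ennreal (exp v) else 0) \<partial>lborel) = ennreal (exp G - 1)"
proof -
  have "(\<integral>\<^sup>+v. (if 0 \<le> v \<and> v < G then ennreal (exp v) else 0) \<partial>lborel)
      = (\<integral>\<^sup>+v. ennreal (exp v) * indicator {0..G} v \<partial>lborel)"
  proof (rule nn_integral_cong_AE)
    show "AE v in lborel. (if 0 \<le> v \<and> v < G then ennreal (exp v) else 0) = ennreal (exp v) * indicator {0..G} v"
      using AE_lborel_singleton[of G] by eventually_elim (auto simp: indicator_def)
  qed
  also have "\<dots> = ennreal (exp G - exp 0)"
    using assms by (intro nn_integral_FTC_Icc) (auto intro!: DERIV_exp)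
  finally show ?thesis by simp
qed

context arm_dist
begin

interpretation M: prob_space M by (rule prob)

lemma analytic_tail:
  fixes x v :: real and k :: nat
  assumes x: "0 < x" "x < \<mu>" and \<mu>1: "\<mu> < 1" and k: "0 < k" and v: "0 \<le> v"
  defines "Y \<equiv> (\<lambda>\<omega>. (\<Sum>s<k. \<omega> s) / real k)"
  defines "h \<equiv> ln ((1 - x) * \<mu> / ((1 - \<mu>) * x))"
  shows "ennreal (exp v) * emeasure (Q k) {\<omega> \<in> space (Q k). 0 \<le> Y \<omega> \<and> Y \<omega> < x \<and> v < k * klr (Y \<omega>) x}
     \<le> ennreal (exp (- real k * klr x \<mu>) * exp (- (h * sqrt (k * x * (1 - x))) * sqrt v))"
proof -
  let ?g = "\<lambda>y. real k * klr y x"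
  let ?S = "{\<omega> \<in> space (Q k). 0 \<le> Y \<omega> \<and> Y \<omega> < x \<and> v < k * klr (Y \<omega>) x}"
  have x1: "x < 1" using x \<mu>1 by simp
  show ?thesis
  proof (cases "?g 0 \<le> v")
    case True
    have "?S = {}"
    proof (rule ccontr)
      assume "?S \<noteq> {}"
      then obtain \<omega> where w: "0 \<le> Y \<omega>" "Y \<omega> < x" "v < k * klr (Y \<omega>) x" by auto
      have "klr (Y \<omega>) x \<le> klr 0 x"
      proof (cases "Y \<omega> = 0")
        case False then show ?thesis using w x1 by (intro klr_anti_p) auto
      qed simp
      then have "?g (Y \<omega>) \<le> ?g 0" by (intro mult_left_mono) auto
      then show False using w True by simp
    qed
    then have "emeasure (Q k) ?S = 0" by (simp only: emeasure_empty)
    then show ?thesis by simp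
  next
    case False
    have gx: "?g x = 0" unfolding klr_def by simp
    have cont: "continuous_on {0..x} ?g" using x x1 by (intro continuous_intros klr_cont)
    obtain z where z: "0 \<le> z" "z \<le> x" "?g z = v"
      using IVT2'[of ?g x v 0, OF _ _ _ cont] gx v False x by auto
    have z0: "0 < z" using z False by (cases "z = 0") auto
    have sub: "?S \<subseteq> {\<omega> \<in> space (Q k). (\<Sum>s<k. \<omega> s) \<le> k * z}"
    proof safe
      fix \<omega> assume w: "\<omega> \<in> space (Q k)" "0 \<le> Y \<omega>" "Y \<omega> < x" "v < k * klr (Y \<omega>) x"
      have "Y \<omega> \<le> z"
      proof (rule ccontr)
        assume "\<not> Y \<omega> \<le> z"
        then have "klr (Y \<omega>) x \<le> klr z x" using w z0 x1 by (intro klr_anti_p) auto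
        then have "?g (Y \<omega>) \<le> ?g z" by (intro mult_left_mono) auto
        then show False using w z by simp
      qed
      then show "(\<Sum>s<k. \<omega> s) \<le> k * z" using k unfolding Y_def by (simp add: divide_le_eq mult.commute)
    qed
    have "emeasure (Q k) ?S \<le> emeasure (Q k) {\<omega> \<in> space (Q k). (\<Sum>s<k. \<omega> s) \<le> k * z}"
      by (intro emeasure_mono sub) measurable
    also have "\<dots> \<le> ennreal (exp (- real k * klr z \<mu>))"
      using z z0 x by (intro chernoff_kl \<mu>1) auto
    finally have e1: "emeasure (Q k) ?S \<le> ennreal (exp (- real k * klr z \<mu>))" .
    have dec: "klr z \<mu> = klr z x + klr x \<mu> + h * (x - z)"
      unfolding h_def using z x x1 \<mu>1 by (intro klr_decomp) auto
    have "exp v * exp (- real k * klr z \<mu>) = exp (- real k * klr x \<mu>) * exp (- (k * h * (x - z)))"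
      unfolding dec using z by (simp add: exp_add[symmetric] algebra_simps)
    also have "\<dots> \<le> exp (- real k * klr x \<mu>) * exp (- (h * sqrt (k * x * (1 - x))) * sqrt v)"
    proof -
      have h0: "0 \<le> h"
      proof -
        have "1 \<le> (1 - x) * \<mu> / ((1 - \<mu>) * x)"
          using x x1 \<mu>1 by (subst le_divide_eq_1) (auto intro!: mult_pos_pos mult_strict_mono simp: algebra_simps)
        then show ?thesis unfolding h_def by simp
      qed
      have chi: "klr z x \<le> (x - z)^2 / (x * (1 - x))" using z x x1 by (intro klr_chi2) auto
      have "v * (x * (1 - x)) \<le> k * (x - z)^2"
      proof -
        have "v = k * klr z x" using z by simp
        also have "\<dots> \<le> k * ((x - z)^2 / (x * (1 - x)))" using chi by (intro mult_left_mono) auto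
        finally show ?thesis using x x1 by (simp add: field_simps)
      qed
      then have "k * (v * (x * (1 - x))) \<le> k * (k * (x - z)^2)" by (intro mult_left_mono) auto
      moreover have "k * (v * (x * (1 - x))) = k * x * (1 - x) * v" by (simp add: algebra_simps)
      moreover have "k * (k * (x - z)^2) = (k * (x - z))^2" by (simp add: power2_eq_square algebra_simps)
      ultimately have sq: "k * x * (1 - x) * v \<le> (k * (x - z))^2" by simp
      have "sqrt (k * x * (1 - x) * v) \<le> sqrt ((k * (x - z))^2)" using sq by (rule real_sqrt_le_mono)
      also have "\<dots> = k * (x - z)" using z by simp
      finally have "sqrt (k * x * (1 - x) * v) \<le> k * (x - z)" .
      then have "h * sqrt (k * x * (1 - x) * v) \<le> h * (k * (x - z))" using h0 by (rule mult_left_mono)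
      moreover have "sqrt (k * x * (1 - x) * v) = sqrt (k * x * (1 - x)) * sqrt v" by (rule real_sqrt_mult)
      ultimately have "h * sqrt (k * x * (1 - x)) * sqrt v \<le> k * h * (x - z)"
        by (simp add: algebra_simps)
      then show ?thesis by simp
    qed
    finally have e2: "exp v * exp (- real k * klr z \<mu>) \<le> exp (- real k * klr x \<mu>) * exp (- (h * sqrt (k * x * (1 - x))) * sqrt v)" .
    have "ennreal (exp v) * emeasure (Q k) ?S \<le> ennreal (exp v) * ennreal (exp (- real k * klr z \<mu>))"
      by (intro mult_left_mono e1) auto
    also have "\<dots> = ennreal (exp v * exp (- real k * klr z \<mu>))" by (simp add: ennreal_mult)
    also have "\<dots> \<le> ennreal (exp (- real k * klr x \<mu>) * exp (- (h * sqrt (k * x * (1 - x))) * sqrt v))"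
      by (intro ennreal_leI e2)
    finally show ?thesis .
  qed
qed


lemma Y_meas[measurable]: "(\<lambda>\<omega>. (\<Sum>s<k. \<omega> s) / real k) \<in> borel_measurable (Q k)"
  by measurable


lemma psi_meas:
  "(\<lambda>\<omega>. if 0 \<le> (\<Sum>s<k. \<omega> s) / real k \<and> (\<Sum>s<k. \<omega> s) / real k < x
              then ennreal (exp (real k * klr ((\<Sum>s<k. \<omega> s) / real k) x)) else 0) \<in> borel_measurable (Q k)"
  unfolding klr_def by measurable

lemma analytic:
  fixes x :: real and k :: nat
  assumes x: "0 < x" "x < \<mu>" and k: "0 < k"
  shows "(\<integral>\<^sup>+\<omega>. (if 0 \<le> (\<Sum>s<k. \<omega> s) / real k \<and> (\<Sum>s<k. \<omega> s) / real k < x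
              then ennreal (exp (real k * klr ((\<Sum>s<k. \<omega> s) / real k) x)) else 0) \<partial>Q k)
     \<le> ennreal ((2 * H_const \<mu> (\<mu> - x) / real k + 1) * exp_neg (real k) (kl x \<mu>))"
proof -
  define Y where "Y = (\<lambda>\<omega>::nat\<Rightarrow>real. (\<Sum>s<k. \<omega> s) / real k)"
  have Ym[measurable]: "Y \<in> borel_measurable (Q k)" unfolding Y_def by measurable
  interpret QP: prob_space "Q k" by (rule Q_prob)
  have x1: "x < 1" using x mu_01 by simp
  show ?thesis
  proof (cases "\<mu> = 1")
    case True
    have klinf: "kl x \<mu> = \<infinity>" unfolding kl_def using True x1 by simp
    let ?N = "{\<omega> \<in> space (Q k). (\<Sum>s<k. \<omega> s) \<le> k * x}"
    have N0: "emeasure (Q k) ?N = 0" using True x1 k by (intro chernoff_one) auto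
    have "?N \<in> null_sets (Q k)" using N0 by (intro null_setsI) measurable
    then have ae: "AE \<omega> in Q k. \<omega> \<notin> ?N" by (rule AE_not_in)
    have "(\<integral>\<^sup>+\<omega>. (if 0 \<le> Y \<omega> \<and> Y \<omega> < x then ennreal (exp (real k * klr (Y \<omega>) x)) else 0) \<partial>Q k)
        = (\<integral>\<^sup>+\<omega>. 0 \<partial>Q k)"
    proof (rule nn_integral_cong_AE)
      show "AE \<omega> in Q k. (if 0 \<le> Y \<omega> \<and> Y \<omega> < x then ennreal (exp (real k * klr (Y \<omega>) x)) else 0) = 0"
        using ae AE_space
      proof (eventually_elim)
        case (elim \<omega>)
        then have "\<not> (\<Sum>s<k. \<omega> s) \<le> k * x" by auto
        then have "\<not> Y \<omega> < x" unfolding Y_def using k by (simp add: divide_less_eq mult.commute)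
        then show ?case by simp
      qed
    qed
    then show ?thesis unfolding Y_def using klinf by (simp add: exp_neg_def)
  next
    case False
    then have \<mu>1: "\<mu> < 1" using mu_01 by simp
    define B where "B = exp (- real k * klr x \<mu>)"
    define h where "h = ln ((1 - x) * \<mu> / ((1 - \<mu>) * x))"
    define c where "c = h * sqrt (k * x * (1 - x))"
    have expneg: "exp_neg (real k) (kl x \<mu>) = B"
    proof -
      have "kl x \<mu> = ereal (klr x \<mu>)" by (rule kl_eq_klr) (use x \<mu>1 in auto)
      then show ?thesis unfolding B_def exp_neg_def by simp
    qed
    have h0: "0 < h"
    proof -
      have "1 < (1 - x) * \<mu> / ((1 - \<mu>) * x)"
        using x x1 \<mu>1 by (subst less_divide_eq_1) (auto intro!: mult_pos_pos mult_strict_mono simp: algebra_simps)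
      then show ?thesis unfolding h_def by simp
    qed
    have c0: "0 < c" unfolding c_def using h0 x x1 k by (intro mult_pos_pos) auto
    have Hc: "2 * H_const \<mu> (\<mu> - x) / real k = 2 / c^2"
    proof -
      have e1: "1 - \<mu> + (\<mu> - x) = 1 - x" by simp
      have e2: "\<mu> - (\<mu> - x) = x" by simp
      have hf: "h_fun \<mu> (\<mu> - x) = h" by (simp only: h_fun_def e1 e2 h_def)
      have Hf: "H_const \<mu> (\<mu> - x) = 1 / (x * (1 - x) * h^2)" by (simp only: H_const_def hf e1 e2)
      have c2: "c^2 = h^2 * (k * x * (1 - x))" unfolding c_def using x x1 by (simp add: power_mult_distrib)
      have nz: "x \<noteq> 0" "1 - x \<noteq> 0" "h \<noteq> 0" "real k \<noteq> 0" using x x1 h0 k by auto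
      show ?thesis unfolding Hf c2 using nz by (simp add: field_simps)
    qed
    define F where "F = (\<lambda>(\<omega>, v). if 0 \<le> Y \<omega> \<and> Y \<omega> < x \<and> 0 \<le> v \<and> v < real k * klr (Y \<omega>) x
        then ennreal (exp v) else 0)"
    have Fm[measurable]: "F \<in> borel_measurable (Q k \<Otimes>\<^sub>M lborel)" unfolding F_def klr_def by measurable
    define A where "A = {\<omega> \<in> space (Q k). 0 \<le> Y \<omega> \<and> Y \<omega> < x}"
    have Am[measurable]: "A \<in> sets (Q k)" unfolding A_def by measurable
    have pw: "(if 0 \<le> Y \<omega> \<and> Y \<omega> < x then ennreal (exp (real k * klr (Y \<omega>) x)) else 0)
        = indicator A \<omega> + (\<integral>\<^sup>+v. F (\<omega>, v) \<partial>lborel)" if \<omega>: "\<omega> \<in> space (Q k)" for \<omega>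
    proof (cases "0 \<le> Y \<omega> \<and> Y \<omega> < x")
      case True
      have G0: "0 \<le> real k * klr (Y \<omega>) x" using True x x1 by (intro mult_nonneg_nonneg klr_nonneg) auto
      have "(\<integral>\<^sup>+v. F (\<omega>, v) \<partial>lborel) = (\<integral>\<^sup>+v. (if 0 \<le> v \<and> v < real k * klr (Y \<omega>) x then ennreal (exp v) else 0) \<partial>lborel)"
        unfolding F_def using True by simp
      also have "\<dots> = ennreal (exp (real k * klr (Y \<omega>) x) - 1)" using G0 by (rule layer_exp)
      finally have "indicator A \<omega> + (\<integral>\<^sup>+v. F (\<omega>, v) \<partial>lborel) = ennreal 1 + ennreal (exp (real k * klr (Y \<omega>) x) - 1)"
        using True \<omega> unfolding A_def by simp
      also have "\<dots> = ennreal (exp (real k * klr (Y \<omega>) x))"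
        using G0 by (subst ennreal_plus[symmetric]) auto
      finally show ?thesis using True by simp
    next
      case False
      then have "(\<lambda>v. F (\<omega>, v)) = (\<lambda>v. 0)" unfolding F_def by auto
      moreover have "indicator A \<omega> = (0::ennreal)" using False unfolding A_def by simp
      ultimately show ?thesis using False by simp
    qed
    have "(\<integral>\<^sup>+\<omega>. (if 0 \<le> Y \<omega> \<and> Y \<omega> < x then ennreal (exp (real k * klr (Y \<omega>) x)) else 0) \<partial>Q k)
        = (\<integral>\<^sup>+\<omega>. indicator A \<omega> + (\<integral>\<^sup>+v. F (\<omega>, v) \<partial>lborel) \<partial>Q k)"
      by (intro nn_integral_cong pw)
    also have "\<dots> = emeasure (Q k) A + (\<integral>\<^sup>+\<omega>. (\<integral>\<^sup>+v. F (\<omega>, v) \<partial>lborel) \<partial>Q k)"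
    proof (subst nn_integral_add)
      show "(\<lambda>\<omega>. \<integral>\<^sup>+ v. F (\<omega>, v) \<partial>lborel) \<in> borel_measurable (Q k)"
        using Fm by (intro sigma_finite_measure.borel_measurable_nn_integral[OF lborel.sigma_finite_measure_axioms]) simp
    qed (auto simp: Am)
    also have "(\<integral>\<^sup>+\<omega>. (\<integral>\<^sup>+v. F (\<omega>, v) \<partial>lborel) \<partial>Q k) = (\<integral>\<^sup>+v. (\<integral>\<^sup>+\<omega>. F (\<omega>, v) \<partial>Q k) \<partial>lborel)"
    proof -
      interpret PSF: pair_sigma_finite "Q k" lborel
        unfolding pair_sigma_finite_def using QP.sigma_finite_measure_axioms lborel.sigma_finite_measure_axioms by simp
      show ?thesis using PSF.Fubini[OF Fm] by simp
    qed
    also have "\<dots> \<le> (\<integral>\<^sup>+v. ennreal B * (ennreal (exp (-c * sqrt v)) * indicator {0..} v) \<partial>lborel)"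
    proof (intro nn_integral_mono)
      fix v :: real
      show "(\<integral>\<^sup>+\<omega>. F (\<omega>, v) \<partial>Q k) \<le> ennreal B * (ennreal (exp (-c * sqrt v)) * indicator {0..} v)"
      proof (cases "0 \<le> v")
        case False
        then show ?thesis unfolding F_def by simp
      next
        case True
        let ?S = "{\<omega> \<in> space (Q k). 0 \<le> Y \<omega> \<and> Y \<omega> < x \<and> v < k * klr (Y \<omega>) x}"
        have Sm: "?S \<in> sets (Q k)" unfolding klr_def by measurable
        have "(\<integral>\<^sup>+\<omega>. F (\<omega>, v) \<partial>Q k) = (\<integral>\<^sup>+\<omega>. ennreal (exp v) * indicator ?S \<omega> \<partial>Q k)"
          unfolding F_def using True by (intro nn_integral_cong) (auto simp: indicator_def)
        also have "\<dots> = ennreal (exp v) * emeasure (Q k) ?S" using Sm by (rule nn_integral_cmult_indicator)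
        also have "\<dots> \<le> ennreal (B * exp (- c * sqrt v))"
          unfolding B_def c_def h_def Y_def using x \<mu>1 k True by (intro analytic_tail) auto
        also have "\<dots> = ennreal B * (ennreal (exp (-c * sqrt v)) * indicator {0..} v)"
          using True by (simp add: ennreal_mult B_def)
        finally show ?thesis .
      qed
    qed
    also have "\<dots> = ennreal B * (\<integral>\<^sup>+v. ennreal (exp (-c * sqrt v)) * indicator {0..} v \<partial>lborel)"
    proof (rule nn_integral_cmult)
      have "(\<lambda>v. ennreal (exp (-c * sqrt v)) * indicator {0..} v) \<in> borel_measurable borel"
      proof -
        have m1: "(\<lambda>v::real. exp (-c * sqrt v)) \<in> borel_measurable borel"
          by (intro borel_measurable_continuous_onI continuous_intros)
        have m2: "(\<lambda>v::real. ennreal (exp (-c * sqrt v))) \<in> borel_measurable borel"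
          using measurable_compose[OF m1 measurable_ennreal] by (simp add: o_def)
        have m3: "(indicator {0..} :: real \<Rightarrow> ennreal) \<in> borel_measurable borel"
          by (intro borel_measurable_indicator) auto
        show ?thesis using m2 m3 by (rule borel_measurable_times_ennreal)
      qed
      then show "(\<lambda>v. ennreal (exp (-c * sqrt v)) * indicator {0..} v) \<in> borel_measurable lborel"
        by simp
    qed
    also have "\<dots> \<le> ennreal B * ennreal (2 / c^2)"
      using c0 by (intro mult_left_mono exp_sqrt_integral) auto
    finally have I1: "(\<integral>\<^sup>+\<omega>. (if 0 \<le> Y \<omega> \<and> Y \<omega> < x then ennreal (exp (real k * klr (Y \<omega>) x)) else 0) \<partial>Q k)
        \<le> emeasure (Q k) A + ennreal B * ennreal (2 / c^2)" by (simp add: add_left_mono)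
    have "emeasure (Q k) A \<le> emeasure (Q k) {\<omega> \<in> space (Q k). (\<Sum>s<k. \<omega> s) \<le> k * x}"
    proof (rule emeasure_mono)
      show "A \<subseteq> {\<omega> \<in> space (Q k). (\<Sum>s<k. \<omega> s) \<le> k * x}"
        unfolding A_def Y_def using k by (auto simp: divide_less_eq mult.commute)
    qed measurable
    also have "\<dots> \<le> ennreal B" unfolding B_def using x \<mu>1 by (intro chernoff_kl) auto
    finally have I2: "emeasure (Q k) A \<le> ennreal B" .
    have "emeasure (Q k) A + ennreal B * ennreal (2 / c^2) \<le> ennreal B + ennreal B * ennreal (2 / c^2)"
      using I2 by (rule add_right_mono)
    also have "\<dots> = ennreal ((2 / c^2 + 1) * B)"
    proof -
      have B0: "0 \<le> B" unfolding B_def by simp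
      have "ennreal B + ennreal B * ennreal (2 / c^2) = ennreal B + ennreal (B * (2 / c^2))"
        using B0 by (subst ennreal_mult) auto
      also have "\<dots> = ennreal (B + B * (2 / c^2))" using B0 by (intro ennreal_plus[symmetric]) auto
      also have "B + B * (2 / c^2) = (2 / c^2 + 1) * B" by (simp add: algebra_simps)
      finally show ?thesis .
    qed
    finally have "(\<integral>\<^sup>+\<omega>. (if 0 \<le> Y \<omega> \<and> Y \<omega> < x then ennreal (exp (real k * klr (Y \<omega>) x)) else 0) \<partial>Q k)
        \<le> ennreal ((2 / c^2 + 1) * B)" using I1 by simp
    then show ?thesis unfolding Y_def expneg Hc .
  qed
qed

end

lemma hist_cong:
  "(\<And>s. 1 \<le> s \<Longrightarrow> s \<le> t \<Longrightarrow> U s = U' s) \<Longrightarrow> klms_hist K X U t = klms_hist K X U' t"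
proof (induction t)
  case 0 then show ?case by simp
next
  case (Suc t)
  have "klms_hist K X U t = klms_hist K X U' t" using Suc by auto
  moreover have "U (Suc t) = U' (Suc t)" using Suc by auto
  ultimately show ?case by (simp add: Let_def split: prod.splits)
qed

lemma hist_S:
  "snd (klms_hist K X U t) b = (\<Sum>j<fst (klms_hist K X U t) b. X (b, j))"
proof (induction t)
  case 0 then show ?case by simp
next
  case (Suc t)
  obtain N S where NS: "klms_hist K X U t = (N, S)" by force
  then have IH: "S b = (\<Sum>j<N b. X (b, j))" using Suc by simp
  show ?case
    using IH by (cases "klms_choose K (Suc t) N S (U (Suc t)) = b") (auto simp: NS Let_def)
qed

lemma arm_Suc: "klms_arm K X U (Suc t) = klms_choose K (Suc t) (fst (klms_hist K X U t)) (snd (klms_hist K X U t)) (U (Suc t))"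
  unfolding klms_arm_def by (simp split: prod.splits)

lemma hist_N_Suc:
  "fst (klms_hist K X U (Suc t)) b = fst (klms_hist K X U t) b + (if klms_arm K X U (Suc t) = b then 1 else 0)"
  unfolding arm_Suc by (simp add: Let_def split: prod.splits)

lemma hist_N_mono: "t1 \<le> t2 \<Longrightarrow> fst (klms_hist K X U t1) b \<le> fst (klms_hist K X U t2) b"
proof (induction t2 rule: dec_induct)
  case base then show ?case by simp
next
  case (step n)
  have "fst (klms_hist K X U n) b \<le> fst (klms_hist K X U (Suc n)) b"
    by (subst hist_N_Suc) simp
  then show ?case using step by linarith
qed

lemma at_most_one_pull:
  fixes A :: "nat set"
  assumes "finite A" "\<And>t. t \<in> A \<Longrightarrow> 1 \<le> t"
  shows "(\<Sum>t\<in>A. ennreal (of_bool (klms_arm K X U t = 1 \<and> fst (klms_hist K X U (t - 1)) 1 = k))) \<le> 1"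
proof (cases "\<exists>t\<in>A. klms_arm K X U t = 1 \<and> fst (klms_hist K X U (t - 1)) 1 = k")
  case False
  have "(\<Sum>t\<in>A. ennreal (of_bool (klms_arm K X U t = 1 \<and> fst (klms_hist K X U (t - 1)) 1 = k))) = 0"
  proof (rule sum.neutral, rule ballI)
    fix t assume "t \<in> A"
    then have "\<not> (klms_arm K X U t = 1 \<and> fst (klms_hist K X U (t - 1)) 1 = k)" using False by blast
    then show "ennreal (of_bool (klms_arm K X U t = 1 \<and> fst (klms_hist K X U (t - 1)) 1 = k)) = 0" by simp
  qed
  then show ?thesis by simp
next
  case True
  then obtain t0 where t0: "t0 \<in> A" "klms_arm K X U t0 = 1" "fst (klms_hist K X U (t0 - 1)) 1 = k" by blast
  have uniq: "t = t0" if t: "t \<in> A" "klms_arm K X U t = 1" "fst (klms_hist K X U (t - 1)) 1 = k" for t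
  proof (rule ccontr)
    assume ne: "t \<noteq> t0"
    have after: "fst (klms_hist K X U (t2 - 1)) 1 \<ge> Suc k"
      if "t1 < t2" "1 \<le> t1" "klms_arm K X U t1 = 1" "fst (klms_hist K X U (t1 - 1)) 1 = k" for t1 t2
    proof -
      have s: "Suc (t1 - 1) = t1" using that by simp
      have "fst (klms_hist K X U t1) 1 = Suc k"
        using hist_N_Suc[of K X U "t1 - 1" 1] that by (simp add: s)
      moreover have "fst (klms_hist K X U t1) 1 \<le> fst (klms_hist K X U (t2 - 1)) 1"
        using that by (intro hist_N_mono) auto
      ultimately show ?thesis by simp
    qed
    show False
    proof (cases "t < t0")
      case True
      have "1 \<le> t" using assms(2) t(1) .
      then have "fst (klms_hist K X U (t0 - 1)) 1 \<ge> Suc k" using after[of t t0] True t by blast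
      then show False using t0(3) by simp
    next
      case False
      then have lt: "t0 < t" using ne by simp
      have "1 \<le> t0" using assms(2) t0(1) .
      then have "fst (klms_hist K X U (t - 1)) 1 \<ge> Suc k" using after[of t0 t] lt t0 by blast
      then show False using t(3) by simp
    qed
  qed
  have "(\<Sum>t\<in>A. ennreal (of_bool (klms_arm K X U t = 1 \<and> fst (klms_hist K X U (t - 1)) 1 = k)))
      = (\<Sum>t\<in>A. if t = t0 then 1 else 0)"
  proof (rule sum.cong[OF refl])
    fix t assume tA: "t \<in> A"
    show "ennreal (of_bool (klms_arm K X U t = 1 \<and> fst (klms_hist K X U (t - 1)) 1 = k)) = (if t = t0 then 1 else 0)"
    proof (cases "t = t0")
      case True then show ?thesis using t0 by simp
    next
      case False
      then have "\<not> (klms_arm K X U t = 1 \<and> fst (klms_hist K X U (t - 1)) 1 = k)" using uniq tA by blast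
      then show ?thesis using False by simp
    qed
  qed
  also have "\<dots> = 1" using t0(1) assms(1) by (simp add: sum.delta)
  finally show ?thesis by simp
qed

definition unif01 :: "real measure" where "unif01 = uniform_measure lborel {0..1}"

lemma unif01_emeasure: "B \<in> sets borel \<Longrightarrow> emeasure unif01 B = emeasure lborel ({0..1} \<inter> B)"
  unfolding unif01_def by (subst emeasure_uniform_measure) (auto simp: divide_ennreal_def)

lemma prob_unif01: "prob_space unif01"
  unfolding unif01_def by (intro prob_space_uniform_measure) auto

lemma choose_eq:
  "K < t \<Longrightarrow> klms_choose K t N S u =
     (LEAST j. 1 \<le> j \<and> (u * (\<Sum>b\<in>{1..K}. klms_weight K N S b) < (\<Sum>b\<in>{1..j}. klms_weight K N S b) \<or> j = K))"
  unfolding klms_choose_def by (simp add: Let_def)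

lemma least_bounds:
  fixes w :: "nat \<Rightarrow> real"
  assumes K: "1 \<le> K"
  defines "L u \<equiv> (LEAST j. 1 \<le> j \<and> (u * (\<Sum>b\<in>{1..K}. w b) < (\<Sum>b\<in>{1..j}. w b) \<or> j = K))"
  shows "1 \<le> L u" "L u \<le> K"
    "1 \<le> L u \<and> (u * (\<Sum>b\<in>{1..K}. w b) < (\<Sum>b\<in>{1..L u}. w b) \<or> L u = K)"
    "\<And>j. j < L u \<Longrightarrow> \<not> (1 \<le> j \<and> (u * (\<Sum>b\<in>{1..K}. w b) < (\<Sum>b\<in>{1..j}. w b) \<or> j = K))"
proof -
  let ?P = "\<lambda>j. 1 \<le> j \<and> (u * (\<Sum>b\<in>{1..K}. w b) < (\<Sum>b\<in>{1..j}. w b) \<or> j = K)"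
  have PK: "?P K" using K by simp
  show P: "?P (L u)" unfolding L_def by (rule LeastI[of ?P, OF PK])
  then show "1 \<le> L u" by simp
  show "L u \<le> K" unfolding L_def by (rule Least_le) (rule PK)
  show "\<And>j. j < L u \<Longrightarrow> \<not> ?P j" unfolding L_def by (rule not_less_Least)
qed

lemma choose_prob_a:
  fixes w :: "nat \<Rightarrow> real"
  assumes K: "1 \<le> K" and a: "2 \<le> a" "a \<le> K" and w0: "\<And>b. 0 \<le> w b" and tot: "0 < (\<Sum>b\<in>{1..K}. w b)"
  shows "(\<integral>\<^sup>+u. ennreal (of_bool ((LEAST j. 1 \<le> j \<and> (u * (\<Sum>b\<in>{1..K}. w b) < (\<Sum>b\<in>{1..j}. w b) \<or> j = K)) = a)) \<partial>unif01)
     \<le> ennreal (w a / (\<Sum>b\<in>{1..K}. w b))"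
proof -
  define T where "T = (\<Sum>b\<in>{1..K}. w b)"
  define c where "c = (\<Sum>b\<in>{1..a-1}. w b)"
  have ca: "(\<Sum>b\<in>{1..a}. w b) = c + w a"
  proof -
    have e: "{1..a} = insert a {1..a-1}" using a by auto
    have n: "a \<notin> {1..a-1}" by auto
    show ?thesis by (simp only: e sum.insert[OF finite_atLeastAtMost n]) (simp add: c_def add.commute)
  qed
  have cK: "(\<Sum>b\<in>{1..K}. w b) = T" unfolding T_def ..
  define B where "B = {c / T .. (c + w a) / T} \<union> {1..}"
  have pw: "ennreal (of_bool ((LEAST j. 1 \<le> j \<and> (u * T < (\<Sum>b\<in>{1..j}. w b) \<or> j = K)) = a)) \<le> indicator B u" for u
  proof (cases "(LEAST j. 1 \<le> j \<and> (u * T < (\<Sum>b\<in>{1..j}. w b) \<or> j = K)) = a")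
    case True
    note lb = least_bounds[OF K, where u=u and w=w, unfolded T_def[symmetric], unfolded True]
    have notP: "\<not> (u * T < c \<or> a - 1 = K)"
      using lb(4)[of "a - 1"] a unfolding c_def by auto
    have "u \<in> B"
    proof (cases "u * T < c + w a")
      case True
      then have "c / T \<le> u" "u \<le> (c + w a) / T" using notP tot unfolding T_def[symmetric]
        by (auto simp: divide_le_eq le_divide_eq mult.commute)
      then show ?thesis unfolding B_def by auto
    next
      case False
      then have "a = K" using lb(3) ca by auto
      then have "T \<le> u * T" using False ca cK by simp
      then have "1 \<le> u" using tot unfolding T_def[symmetric] by simp
      then show ?thesis unfolding B_def by auto
    qed
    then show ?thesis using True by simp
  qed simp
  have "(\<integral>\<^sup>+u. ennreal (of_bool ((LEAST j. 1 \<le> j \<and> (u * T < (\<Sum>b\<in>{1..j}. w b) \<or> j = K)) = a)) \<partial>unif01)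
      \<le> (\<integral>\<^sup>+u. indicator B u \<partial>unif01)" by (intro nn_integral_mono pw)
  also have "\<dots> = emeasure unif01 B" unfolding B_def by (intro nn_integral_indicator) (simp add: unif01_def)
  also have "\<dots> = emeasure lborel ({0..1} \<inter> B)" unfolding B_def by (intro unif01_emeasure) auto
  also have "\<dots> \<le> emeasure lborel ({c / T .. (c + w a) / T} \<union> {1})"
    by (intro emeasure_mono) (auto simp: B_def)
  also have "\<dots> \<le> emeasure lborel {c / T .. (c + w a) / T} + emeasure lborel {1::real}"
    by (intro emeasure_subadditive) auto
  also have "\<dots> = ennreal (w a / T)"
  proof -
    have "c / T \<le> (c + w a) / T" using w0[of a] tot unfolding T_def[symmetric] by (simp add: divide_right_mono)
    then have "emeasure lborel {c / T .. (c + w a) / T} = ennreal ((c + w a) / T - c / T)" by simp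
    also have "(c + w a) / T - c / T = w a / T" by (simp add: diff_divide_distrib[symmetric])
    finally show ?thesis by simp
  qed
  finally show ?thesis unfolding T_def .
qed

lemma choose_prob_1:
  fixes w :: "nat \<Rightarrow> real"
  assumes K: "1 \<le> K" and w0: "\<And>b. 0 \<le> w b" and tot: "0 < (\<Sum>b\<in>{1..K}. w b)"
  shows "ennreal (w 1 / (\<Sum>b\<in>{1..K}. w b)) \<le>
    (\<integral>\<^sup>+u. ennreal (of_bool ((LEAST j. 1 \<le> j \<and> (u * (\<Sum>b\<in>{1..K}. w b) < (\<Sum>b\<in>{1..j}. w b) \<or> j = K)) = 1)) \<partial>unif01)"
proof -
  define T where "T = (\<Sum>b\<in>{1..K}. w b)"
  have w1T: "w 1 \<le> T"
    unfolding T_def using K w0 by (intro member_le_sum) auto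
  have r1: "w 1 / T \<le> 1" using w1T tot unfolding T_def[symmetric] by simp
  have r0: "0 \<le> w 1 / T" using w0[of 1] tot unfolding T_def[symmetric] by simp
  have pw: "indicator {0..<w 1 / T} u \<le> ennreal (of_bool ((LEAST j. 1 \<le> j \<and> (u * T < (\<Sum>b\<in>{1..j}. w b) \<or> j = K)) = 1))" for u
  proof (cases "u \<in> {0..<w 1 / T}")
    case True
    then have "u * T < w 1" using tot unfolding T_def[symmetric] by (simp add: less_divide_eq)
    then have P1: "1 \<le> (1::nat) \<and> (u * T < (\<Sum>b\<in>{1..1}. w b) \<or> (1::nat) = K)" by simp
    have "(LEAST j. 1 \<le> j \<and> (u * T < (\<Sum>b\<in>{1..j}. w b) \<or> j = K)) \<le> 1" by (rule Least_le) (rule P1)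
    moreover have "1 \<le> (LEAST j. 1 \<le> j \<and> (u * T < (\<Sum>b\<in>{1..j}. w b) \<or> j = K))"
      using least_bounds(1)[OF K, where u=u and w=w] unfolding T_def by simp
    ultimately have "(LEAST j. 1 \<le> j \<and> (u * T < (\<Sum>b\<in>{1..j}. w b) \<or> j = K)) = 1" by simp
    then show ?thesis by (simp add: indicator_def)
  qed simp
  have "ennreal (w 1 / T) = emeasure lborel ({0..1} \<inter> {0..<w 1 / T})"
  proof -
    have "{0..1} \<inter> {0..<w 1 / T} = {0..<w 1 / T}" using r1 by auto
    then show ?thesis using r0 by simp
  qed
  also have "\<dots> = emeasure unif01 {0..<w 1 / T}" by (intro unif01_emeasure[symmetric]) auto
  also have "\<dots> = (\<integral>\<^sup>+u. indicator {0..<w 1 / T} u \<partial>unif01)"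
    by (intro nn_integral_indicator[symmetric]) (simp add: unif01_def)
  also have "\<dots> \<le> (\<integral>\<^sup>+u. ennreal (of_bool ((LEAST j. 1 \<le> j \<and> (u * T < (\<Sum>b\<in>{1..j}. w b) \<or> j = K)) = 1)) \<partial>unif01)"
    by (intro nn_integral_mono pw)
  finally show ?thesis unfolding T_def .
qed

lemma exp_neg_nonneg: "0 \<le> exp_neg c d"
  unfolding exp_neg_def by simp

lemma exp_neg_le1: "0 \<le> c \<Longrightarrow> 0 \<le> d \<Longrightarrow> exp_neg c d \<le> 1"
  unfolding exp_neg_def
  by (cases d) (auto intro!: mult_nonneg_nonneg)

lemma kl_nonneg:
  assumes "0 \<le> p" "p \<le> q" "q \<le> 1"
  shows "0 \<le> kl p q"
proof (cases "q < 1")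
  case True
  show ?thesis
  proof (cases "q = 0")
    case True
    then have "p = 0" using assms by simp
    then show ?thesis using True unfolding kl_def by simp
  next
    case False
    then have "kl p q = ereal (klr p q)" using assms True by (intro kl_eq_klr) auto
    moreover have "0 \<le> klr p q" using assms True False by (intro klr_nonneg) auto
    ultimately show ?thesis by simp
  qed
next
  case False
  then have q: "q = 1" using assms by simp
  show ?thesis
  proof (cases "p = 1")
    case True then show ?thesis using q unfolding kl_def by simp
  next
    case False then show ?thesis using q assms unfolding kl_def by simp
  qed
qed

lemma weight_le1:
  assumes "0 \<le> emp_mean N S b" "emp_mean N S b \<le> emp_max K N S" "emp_max K N S \<le> 1"
  shows "klms_weight K N S b \<le> 1"
  unfolding klms_weight_def using assms by (intro exp_neg_le1 kl_nonneg) auto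

lemma weight_nonneg: "0 \<le> klms_weight K N S b"
  unfolding klms_weight_def by (rule exp_neg_nonneg)

lemma emp_max_facts:
  assumes K: "1 \<le> K" and e: "\<And>b. b \<in> {1..K} \<Longrightarrow> 0 \<le> emp_mean N S b \<and> emp_mean N S b \<le> 1"
  shows "\<And>b. b \<in> {1..K} \<Longrightarrow> emp_mean N S b \<le> emp_max K N S" "0 \<le> emp_max K N S" "emp_max K N S \<le> 1"
proof -
  have fin: "finite (emp_mean N S ` {1..K})" by simp
  have ne: "emp_mean N S ` {1..K} \<noteq> {}" using K by auto
  show "\<And>b. b \<in> {1..K} \<Longrightarrow> emp_mean N S b \<le> emp_max K N S"
    unfolding emp_max_def using fin by (intro Max_ge) auto
  obtain b where b: "b \<in> {1..K}" "emp_max K N S = emp_mean N S b"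
    using Max_in[OF fin ne] unfolding emp_max_def by auto
  then show "0 \<le> emp_max K N S" "emp_max K N S \<le> 1" using e[OF b(1)] by auto
qed

lemma inner_ratio:
  fixes x :: real
  assumes K: "2 \<le> K" and t: "K < t" and a: "a \<in> {2..K}"
    and e: "\<And>b. b \<in> {1..K} \<Longrightarrow> 0 \<le> emp_mean N S b \<and> emp_mean N S b \<le> 1"
    and x: "0 < x" "x < 1" and mx: "emp_max K N S < x" and Nk: "N 1 = k"
  shows "(\<integral>\<^sup>+u. ennreal (of_bool (klms_choose K t N S u = a)) \<partial>unif01)
    \<le> ennreal (exp (real k * klr (emp_mean N S 1) x)) * (\<integral>\<^sup>+u. ennreal (of_bool (klms_choose K t N S u = 1)) \<partial>unif01)"
proof -
  have K1: "1 \<le> K" using K by simp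
  note mf = emp_max_facts[OF K1 e]
  define w where "w = klms_weight K N S"
  define T where "T = (\<Sum>b\<in>{1..K}. w b)"
  define e1 where "e1 = emp_mean N S 1"
  define em where "em = emp_max K N S"
  have w0: "\<And>b. 0 \<le> w b" unfolding w_def by (rule weight_nonneg)
  have e1r: "0 \<le> e1" "e1 \<le> em" unfolding e1_def em_def using e[of 1] mf(1)[of 1] K by auto
  have em1: "em < 1" using mx x unfolding em_def by simp
  have klw: "kl e1 em = ereal (klr e1 em)" using e1r em1 by (intro kl_eq_klr) auto
  have w1: "w 1 = exp (- real k * klr e1 em)"
    unfolding w_def klms_weight_def e1_def[symmetric] em_def[symmetric] klw exp_neg_def Nk by simp
  have w1p: "0 < w 1" unfolding w1 by simp
  have wa: "w a \<le> 1" unfolding w_def using a e[of a] mf(1)[of a] mf(3) by (intro weight_le1) auto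
  have T1: "w 1 \<le> T" unfolding T_def using K w0 by (intro member_le_sum) auto
  have Tp: "0 < T" using T1 w1p by simp
  have klmono: "klr e1 em \<le> klr e1 x"
  proof (cases "em = 0")
    case True
    then have "e1 = 0" using e1r by simp
    then have "klr e1 em = 0" using True unfolding klr_def by simp
    moreover have "0 \<le> klr e1 x" using x e1r em1 \<open>e1 = 0\<close> by (intro klr_nonneg) auto
    ultimately show ?thesis by simp
  next
    case False
    then show ?thesis using e1r mx x unfolding em_def by (intro klr_mono_q) auto
  qed
  define G where "G = exp (real k * klr e1 x)"
  have Gw: "1 \<le> G * w 1"
  proof -
    have "G * w 1 = exp (real k * (klr e1 x - klr e1 em))" unfolding G_def w1 by (simp add: exp_add[symmetric] algebra_simps)
    moreover have "0 \<le> real k * (klr e1 x - klr e1 em)" using klmono by simp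
    ultimately show ?thesis by simp
  qed
  have ch: "klms_choose K t N S = (\<lambda>u. LEAST j. 1 \<le> j \<and> (u * T < (\<Sum>b\<in>{1..j}. w b) \<or> j = K))"
    using t unfolding T_def w_def by (simp add: fun_eq_iff choose_eq)
  have "(\<integral>\<^sup>+u. ennreal (of_bool (klms_choose K t N S u = a)) \<partial>unif01) \<le> ennreal (w a / T)"
    unfolding ch T_def using K1 a w0 Tp unfolding T_def by (intro choose_prob_a) auto
  also have "\<dots> \<le> ennreal (G * (w 1 / T))"
  proof (rule ennreal_leI)
    have "w a / T \<le> 1 / T" using wa Tp by (simp add: divide_right_mono)
    also have "\<dots> \<le> (G * w 1) / T" using Gw Tp by (simp add: divide_right_mono)
    finally show "w a / T \<le> G * (w 1 / T)" by simp
  qed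
  also have "\<dots> = ennreal G * ennreal (w 1 / T)" unfolding G_def using w1p Tp by (subst ennreal_mult) auto
  also have "\<dots> \<le> ennreal G * (\<integral>\<^sup>+u. ennreal (of_bool (klms_choose K t N S u = 1)) \<partial>unif01)"
    unfolding ch T_def using K1 w0 Tp unfolding T_def by (intro mult_left_mono choose_prob_1) auto
  finally show ?thesis unfolding G_def e1_def .
qed

lemma exp_neg_kl_eq:
  "exp_neg c (kl p q) = (if (0 < p \<and> q \<le> 0) \<or> (p < 1 \<and> 1 \<le> q) then 0 else
     exp (- c * ((if p = 0 then 0 else p * ln (p / q)) + (if p = 1 then 0 else (1 - p) * ln ((1 - p) / (1 - q))))))"
  unfolding exp_neg_def kl_def by simp

context
  fixes M :: "'m measure" and K :: nat
begin

lemma emp_max_measurable[measurable]: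
  assumes [measurable]: "\<And>b. (\<lambda>\<omega>. Nf \<omega> b) \<in> measurable M (count_space UNIV)"
    "\<And>b. (\<lambda>\<omega>. Sf \<omega> b) \<in> borel_measurable M"
  shows "(\<lambda>\<omega>. emp_max K (Nf \<omega>) (Sf \<omega>)) \<in> borel_measurable M"
  unfolding emp_max_def emp_mean_def by measurable

lemma weight_measurable[measurable]:
  assumes [measurable]: "\<And>b. (\<lambda>\<omega>. Nf \<omega> b) \<in> measurable M (count_space UNIV)"
    "\<And>b. (\<lambda>\<omega>. Sf \<omega> b) \<in> borel_measurable M"
  shows "(\<lambda>\<omega>. klms_weight K (Nf \<omega>) (Sf \<omega>) b) \<in> borel_measurable M"
proof -
  have [measurable]: "(\<lambda>\<omega>. emp_max K (Nf \<omega>) (Sf \<omega>)) \<in> borel_measurable M" by measurable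
  show ?thesis unfolding klms_weight_def exp_neg_kl_eq emp_mean_def by measurable
qed

lemma choose_measurable[measurable]:
  assumes [measurable]: "\<And>b. (\<lambda>\<omega>. Nf \<omega> b) \<in> measurable M (count_space UNIV)"
    "\<And>b. (\<lambda>\<omega>. Sf \<omega> b) \<in> borel_measurable M" "uf \<in> borel_measurable M"
  shows "(\<lambda>\<omega>. klms_choose K t (Nf \<omega>) (Sf \<omega>) (uf \<omega>)) \<in> measurable M (count_space UNIV)"
proof (cases "t \<le> K")
  case True
  then show ?thesis unfolding klms_choose_def by simp
next
  case False
  have [measurable]: "\<And>b. (\<lambda>\<omega>. klms_weight K (Nf \<omega>) (Sf \<omega>) b) \<in> borel_measurable M" by measurable
  show ?thesis using False unfolding klms_choose_def Let_def by measurable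
qed

lemma hist_measurable:
  assumes Xm[measurable]: "\<And>p. (\<lambda>\<omega>. Xf \<omega> p) \<in> borel_measurable M"
      and Um[measurable]: "\<And>s. (\<lambda>\<omega>. Uf \<omega> s) \<in> borel_measurable M"
  shows "(\<forall>b. (\<lambda>\<omega>. fst (klms_hist K (Xf \<omega>) (Uf \<omega>) t) b) \<in> measurable M (count_space UNIV)) \<and>
         (\<forall>b. (\<lambda>\<omega>. snd (klms_hist K (Xf \<omega>) (Uf \<omega>) t) b) \<in> borel_measurable M)"
proof (induction t)
  case 0 then show ?case by simp
next
  case (Suc t)
  define Nf where "Nf = (\<lambda>\<omega>. fst (klms_hist K (Xf \<omega>) (Uf \<omega>) t))"
  define Sf where "Sf = (\<lambda>\<omega>. snd (klms_hist K (Xf \<omega>) (Uf \<omega>) t))"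
  have [measurable]: "\<And>b. (\<lambda>\<omega>. Nf \<omega> b) \<in> measurable M (count_space UNIV)"
    "\<And>b. (\<lambda>\<omega>. Sf \<omega> b) \<in> borel_measurable M" using Suc unfolding Nf_def Sf_def by auto
  define af where "af = (\<lambda>\<omega>. klms_choose K (Suc t) (Nf \<omega>) (Sf \<omega>) (Uf \<omega> (Suc t)))"
  have am[measurable]: "af \<in> measurable M (count_space UNIV)" unfolding af_def by measurable
  have eqN: "fst (klms_hist K (Xf \<omega>) (Uf \<omega>) (Suc t)) b = (if af \<omega> = b then Suc (Nf \<omega> b) else Nf \<omega> b)" for \<omega> b
    unfolding af_def Nf_def Sf_def by (simp add: Let_def split: prod.splits)
  have eqS: "snd (klms_hist K (Xf \<omega>) (Uf \<omega>) (Suc t)) b = (if af \<omega> = b then Sf \<omega> b + Xf \<omega> (b, Nf \<omega> b) else Sf \<omega> b)" for \<omega> b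
    unfolding af_def Nf_def Sf_def by (simp add: Let_def split: prod.splits)
  have XN[measurable]: "(\<lambda>\<omega>. Xf \<omega> (b, Nf \<omega> b)) \<in> borel_measurable M" for b
    by (rule measurable_compose_countable[where f="\<lambda>i \<omega>. Xf \<omega> (b, i)" and g="\<lambda>\<omega>. Nf \<omega> b"]) measurable
  show ?case unfolding eqN eqS by measurable
qed

end

lemma peel:
  fixes Mu :: "'a measure" and t :: nat and f :: "(nat \<Rightarrow> 'a) \<Rightarrow> 'a \<Rightarrow> ennreal"
  assumes Mu: "prob_space Mu"
    and fm: "(\<lambda>(U, u). f U u) \<in> borel_measurable (PiM UNIV (\<lambda>_. Mu) \<Otimes>\<^sub>M Mu)"
    and indep: "\<And>U y u. f (U(t := y)) u = f U u"
  shows "(\<integral>\<^sup>+U. f U (U t) \<partial>PiM UNIV (\<lambda>_. Mu)) = (\<integral>\<^sup>+U. (\<integral>\<^sup>+u. f U u \<partial>Mu) \<partial>PiM UNIV (\<lambda>_. Mu))"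
proof -
  interpret Mu: prob_space Mu by (rule Mu)
  define PU where "PU = PiM (UNIV::nat set) (\<lambda>_. Mu)"
  define PV where "PV = PiM (UNIV - {t}) (\<lambda>_. Mu)"
  interpret PV: prob_space PV unfolding PV_def by (intro prob_space_PiM Mu)
  interpret P2: pair_sigma_finite Mu PV
    unfolding pair_sigma_finite_def using Mu.sigma_finite_measure_axioms PV.sigma_finite_measure_axioms by simp
  have ins: "insert t (UNIV - {t}) = UNIV" by auto
  have D: "distr (Mu \<Otimes>\<^sub>M PV) PU (\<lambda>(y, V). V(t := y)) = PU"
    using distr_pair_PiM_eq_PiM[of "UNIV - {t}" "\<lambda>_. Mu" t] Mu unfolding PU_def PV_def ins by simp
  have phim: "(\<lambda>(y, V). V(t := y)) \<in> Mu \<Otimes>\<^sub>M PV \<rightarrow>\<^sub>M PU"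
  proof -
    have "(\<lambda>p. (snd p)(t := fst p)) \<in> Mu \<Otimes>\<^sub>M PV \<rightarrow>\<^sub>M PU"
      unfolding PU_def PV_def by (rule measurable_fun_upd[where J="UNIV - {t}"]) auto
    then show ?thesis by (simp add: case_prod_beta')
  qed
  have fm': "(\<lambda>p. f (fst p) (snd p)) \<in> borel_measurable (PU \<Otimes>\<^sub>M Mu)"
    using fm unfolding PU_def by (simp add: case_prod_beta')
  define g where "g = (\<lambda>U. \<integral>\<^sup>+u. f U u \<partial>Mu)"
  have gm: "g \<in> borel_measurable PU"
    unfolding g_def using fm unfolding PU_def
    by (intro sigma_finite_measure.borel_measurable_nn_integral[OF Mu.sigma_finite_measure_axioms]) simp
  have lm: "(\<lambda>U. f U (U t)) \<in> borel_measurable PU"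
  proof -
    have "(\<lambda>U. (U, U t)) \<in> PU \<rightarrow>\<^sub>M PU \<Otimes>\<^sub>M Mu"
      unfolding PU_def by (intro measurable_Pair measurable_ident_sets measurable_component_singleton) auto
    from measurable_compose[OF this fm'] show ?thesis by simp
  qed
  have F1m: "(\<lambda>p. f ((snd p)(t := fst p)) (fst p)) \<in> borel_measurable (Mu \<Otimes>\<^sub>M PV)"
  proof -
    have "(\<lambda>p. ((snd p)(t := fst p), fst p)) \<in> Mu \<Otimes>\<^sub>M PV \<rightarrow>\<^sub>M PU \<Otimes>\<^sub>M Mu"
      using phim by (intro measurable_Pair) (auto simp: case_prod_beta')
    from measurable_compose[OF this fm'] show ?thesis by simp
  qed
  have F2m: "(\<lambda>p. g ((snd p)(t := fst p))) \<in> borel_measurable (Mu \<Otimes>\<^sub>M PV)"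
    using measurable_compose[OF phim gm] by (simp add: case_prod_beta')
  have upd: "f (V(t := y)) u = f (V(t := undefined)) u" for V y u
    by (metis fun_upd_upd indep)
  have "(\<integral>\<^sup>+U. f U (U t) \<partial>PU) = (\<integral>\<^sup>+U. f U (U t) \<partial>distr (Mu \<Otimes>\<^sub>M PV) PU (\<lambda>(y, V). V(t := y)))"
    unfolding D ..
  also have "\<dots> = (\<integral>\<^sup>+p. f ((snd p)(t := fst p)) (fst p) \<partial>(Mu \<Otimes>\<^sub>M PV))"
    by (subst nn_integral_distr[OF phim]) (simp_all add: lm case_prod_beta')
  also have "\<dots> = (\<integral>\<^sup>+V. (\<integral>\<^sup>+y. f (V(t := y)) y \<partial>Mu) \<partial>PV)"
    using P2.nn_integral_snd[OF F1m] by simp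
  also have "\<dots> = (\<integral>\<^sup>+V. g (V(t := undefined)) \<partial>PV)"
  proof (rule nn_integral_cong)
    fix V :: "nat \<Rightarrow> 'a"
    show "(\<integral>\<^sup>+y. f (V(t := y)) y \<partial>Mu) = g (V(t := undefined))"
      unfolding g_def by (rule nn_integral_cong) (rule upd)
  qed
  finally have L: "(\<integral>\<^sup>+U. f U (U t) \<partial>PU) = (\<integral>\<^sup>+V. g (V(t := undefined)) \<partial>PV)" .
  have "(\<integral>\<^sup>+U. g U \<partial>PU) = (\<integral>\<^sup>+U. g U \<partial>distr (Mu \<Otimes>\<^sub>M PV) PU (\<lambda>(y, V). V(t := y)))"
    unfolding D ..
  also have "\<dots> = (\<integral>\<^sup>+p. g ((snd p)(t := fst p)) \<partial>(Mu \<Otimes>\<^sub>M PV))"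
    by (subst nn_integral_distr[OF phim]) (simp_all add: gm case_prod_beta')
  also have "\<dots> = (\<integral>\<^sup>+V. (\<integral>\<^sup>+y. g (V(t := y)) \<partial>Mu) \<partial>PV)"
    using P2.nn_integral_snd[OF F2m] by simp
  also have "\<dots> = (\<integral>\<^sup>+V. g (V(t := undefined)) \<partial>PV)"
  proof -
    have e: "g (V(t := y)) = g (V(t := undefined))" for V y
      unfolding g_def by (rule nn_integral_cong) (rule upd)
    have "(\<integral>\<^sup>+y. g (V(t := y)) \<partial>Mu) = g (V(t := undefined))" for V
    proof -
      have "(\<integral>\<^sup>+y. g (V(t := y)) \<partial>Mu) = (\<integral>\<^sup>+y. g (V(t := undefined)) \<partial>Mu)"
        by (rule nn_integral_cong) (rule e)
      also have "\<dots> = g (V(t := undefined))" by (simp add: Mu.emeasure_space_1)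
      finally show ?thesis .
    qed
    then show ?thesis by simp
  qed
  finally show ?thesis using L unfolding g_def PU_def by simp
qed

definition Gk :: "nat \<Rightarrow> real \<Rightarrow> (nat \<times> nat \<Rightarrow> real) \<Rightarrow> ennreal" where
  "Gk k x X = (if 0 \<le> (\<Sum>s<k. X (1, s)) / real k \<and> (\<Sum>s<k. X (1, s)) / real k < x
      then ennreal (exp (real k * klr ((\<Sum>s<k. X (1, s)) / real k) x)) else 0)"

lemma emp_range:
  assumes good: "\<And>j. X (b, j) \<in> {0..1}"
  shows "0 \<le> emp_mean (fst (klms_hist K X U t)) (snd (klms_hist K X U t)) b \<and>
         emp_mean (fst (klms_hist K X U t)) (snd (klms_hist K X U t)) b \<le> 1"
proof -
  define n where "n = fst (klms_hist K X U t) b"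
  have S: "snd (klms_hist K X U t) b = (\<Sum>j<n. X (b, j))" unfolding n_def by (rule hist_S)
  have s0: "0 \<le> (\<Sum>j<n. X (b, j))" using good by (intro sum_nonneg) auto
  have s1: "(\<Sum>j<n. X (b, j)) \<le> (\<Sum>j<n. 1)" using good by (intro sum_mono) auto
  show ?thesis unfolding emp_mean_def S n_def[symmetric] using s0 s1
    by (cases "n = 0") (auto simp: divide_le_eq)
qed

lemma emp_one:
  assumes "fst (klms_hist K X U t) 1 = k"
  shows "emp_mean (fst (klms_hist K X U t)) (snd (klms_hist K X U t)) 1 = (\<Sum>s<k. X (1, s)) / real k"
  unfolding emp_mean_def hist_S[of K X U t 1] assms by simp

lemma unif01_sets: "sets unif01 = sets borel"
  unfolding unif01_def by simp

lemma PU_coord[measurable]: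
  "(\<lambda>\<omega>. fst \<omega> s) \<in> borel_measurable (PiM UNIV (\<lambda>_. unif01) \<Otimes>\<^sub>M unif01)"
proof -
  have m: "(\<lambda>\<omega>. fst \<omega> s) \<in> PiM UNIV (\<lambda>_. unif01) \<Otimes>\<^sub>M unif01 \<rightarrow>\<^sub>M unif01"
    by (rule measurable_compose[OF measurable_fst measurable_component_singleton]) simp
  have e: "measurable (PiM UNIV (\<lambda>_. unif01) \<Otimes>\<^sub>M unif01) unif01 = measurable (PiM UNIV (\<lambda>_. unif01) \<Otimes>\<^sub>M unif01) borel"
    by (rule measurable_cong_sets[OF refl unif01_sets])
  show ?thesis using m unfolding e .
qed

lemma PU_snd[measurable]: "snd \<in> borel_measurable (PiM UNIV (\<lambda>_. unif01) \<Otimes>\<^sub>M unif01)"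
proof -
  have e: "measurable (PiM UNIV (\<lambda>_. unif01) \<Otimes>\<^sub>M unif01) unif01 = measurable (PiM UNIV (\<lambda>_. unif01) \<Otimes>\<^sub>M unif01) borel"
    by (rule measurable_cong_sets[OF refl unif01_sets])
  show ?thesis using measurable_snd[of "PiM UNIV (\<lambda>_. unif01)" unif01] unfolding e .
qed

lemma per_t_bound:
  fixes x :: real
  assumes K: "2 \<le> K" and a: "a \<in> {2..K}" and t: "K < t" and x: "0 < x" "x < 1"
    and good: "\<And>b j. b \<in> {1..K} \<Longrightarrow> X (b, j) \<in> {0..1}"
  shows "(\<integral>\<^sup>+U. ennreal (of_bool (klms_arm K X U t = a \<and> emp_max K (fst (klms_hist K X U (t-1))) (snd (klms_hist K X U (t-1))) < x
              \<and> fst (klms_hist K X U (t-1)) 1 = k)) \<partial>PiM UNIV (\<lambda>_. unif01))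
     \<le> Gk k x X * (\<integral>\<^sup>+U. ennreal (of_bool (klms_arm K X U t = 1 \<and> fst (klms_hist K X U (t-1)) 1 = k)) \<partial>PiM UNIV (\<lambda>_. unif01))"
proof -
  define PU where "PU = PiM (UNIV :: nat set) (\<lambda>_. unif01)"
  define NN where "NN = (\<lambda>U. fst (klms_hist K X U (t-1)))"
  define SS where "SS = (\<lambda>U. snd (klms_hist K X U (t-1)))"
  define fa where "fa = (\<lambda>U u. ennreal (of_bool (klms_choose K t (NN U) (SS U) u = a \<and> emp_max K (NN U) (SS U) < x \<and> NN U 1 = k)))"
  define f1 where "f1 = (\<lambda>U u. ennreal (of_bool (klms_choose K t (NN U) (SS U) u = 1 \<and> NN U 1 = k)))"
  have arm: "klms_arm K X U t = klms_choose K t (NN U) (SS U) (U t)" for U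
    unfolding klms_arm_def NN_def SS_def by (simp split: prod.splits)
  have hm: "(\<forall>b. (\<lambda>\<omega>. fst (klms_hist K ((\<lambda>_. X) \<omega>) (fst \<omega>) (t-1)) b) \<in> measurable (PU \<Otimes>\<^sub>M unif01) (count_space UNIV)) \<and>
         (\<forall>b. (\<lambda>\<omega>. snd (klms_hist K ((\<lambda>_. X) \<omega>) (fst \<omega>) (t-1)) b) \<in> borel_measurable (PU \<Otimes>\<^sub>M unif01))"
    unfolding PU_def by (rule hist_measurable) auto
  have Nm[measurable]: "\<And>b. (\<lambda>\<omega>. NN (fst \<omega>) b) \<in> measurable (PU \<Otimes>\<^sub>M unif01) (count_space UNIV)"
    using hm unfolding NN_def by simp
  have Sm[measurable]: "\<And>b. (\<lambda>\<omega>. SS (fst \<omega>) b) \<in> borel_measurable (PU \<Otimes>\<^sub>M unif01)"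
    using hm unfolding SS_def by simp
  have sndm[measurable]: "snd \<in> borel_measurable (PU \<Otimes>\<^sub>M unif01)" unfolding PU_def by (rule PU_snd)
  have fam: "(\<lambda>(U, u). fa U u) \<in> borel_measurable (PU \<Otimes>\<^sub>M unif01)"
  proof -
    have "(\<lambda>\<omega>. ennreal (of_bool (klms_choose K t (NN (fst \<omega>)) (SS (fst \<omega>)) (snd \<omega>) = a \<and> emp_max K (NN (fst \<omega>)) (SS (fst \<omega>)) < x \<and> NN (fst \<omega>) 1 = k)))
       \<in> borel_measurable (PU \<Otimes>\<^sub>M unif01)" by measurable
    then show ?thesis unfolding fa_def by (simp add: case_prod_beta')
  qed
  have f1m: "(\<lambda>(U, u). f1 U u) \<in> borel_measurable (PU \<Otimes>\<^sub>M unif01)"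
  proof -
    have "(\<lambda>\<omega>. ennreal (of_bool (klms_choose K t (NN (fst \<omega>)) (SS (fst \<omega>)) (snd \<omega>) = 1 \<and> NN (fst \<omega>) 1 = k)))
       \<in> borel_measurable (PU \<Otimes>\<^sub>M unif01)" by measurable
    then show ?thesis unfolding f1_def by (simp add: case_prod_beta')
  qed
  have indepN: "NN (U(t := y)) = NN U" "SS (U(t := y)) = SS U" for U y
    unfolding NN_def SS_def using t by (auto intro!: arg_cong[where f=fst] arg_cong[where f=snd] hist_cong)
  have pua: "prob_space unif01" by (rule prob_unif01)
  have "(\<integral>\<^sup>+U. ennreal (of_bool (klms_arm K X U t = a \<and> emp_max K (fst (klms_hist K X U (t-1))) (snd (klms_hist K X U (t-1))) < x
              \<and> fst (klms_hist K X U (t-1)) 1 = k)) \<partial>PU) = (\<integral>\<^sup>+U. fa U (U t) \<partial>PU)"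
    unfolding fa_def arm NN_def SS_def ..
  also have "\<dots> = (\<integral>\<^sup>+U. (\<integral>\<^sup>+u. fa U u \<partial>unif01) \<partial>PU)"
    unfolding PU_def by (rule peel[OF pua]) (use fam in \<open>simp_all add: PU_def fa_def indepN\<close>)
  also have "\<dots> \<le> (\<integral>\<^sup>+U. Gk k x X * (\<integral>\<^sup>+u. f1 U u \<partial>unif01) \<partial>PU)"
  proof (rule nn_integral_mono)
    fix U :: "nat \<Rightarrow> real"
    show "(\<integral>\<^sup>+u. fa U u \<partial>unif01) \<le> Gk k x X * (\<integral>\<^sup>+u. f1 U u \<partial>unif01)"
    proof (cases "emp_max K (NN U) (SS U) < x \<and> NN U 1 = k")
      case False
      then have "(\<lambda>u. fa U u) = (\<lambda>u. 0)" unfolding fa_def by auto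
      then show ?thesis by simp
    next
      case True
      have e: "\<And>b. b \<in> {1..K} \<Longrightarrow> 0 \<le> emp_mean (NN U) (SS U) b \<and> emp_mean (NN U) (SS U) b \<le> 1"
        unfolding NN_def SS_def using good by (intro emp_range) auto
      have e1: "emp_mean (NN U) (SS U) 1 = (\<Sum>s<k. X (1, s)) / real k"
        unfolding NN_def SS_def by (rule emp_one) (use True in \<open>simp add: NN_def\<close>)
      have K1: "1 \<le> K" using K by simp
      have "emp_mean (NN U) (SS U) 1 \<le> emp_max K (NN U) (SS U)"
        using emp_max_facts(1)[OF K1 e, of 1] K1 by simp
      then have G: "Gk k x X = ennreal (exp (real k * klr (emp_mean (NN U) (SS U) 1) x))"
        unfolding Gk_def e1[symmetric] using True e[of 1] K1 by auto
      have fa_eq: "(\<lambda>u. fa U u) = (\<lambda>u. ennreal (of_bool (klms_choose K t (NN U) (SS U) u = a)))"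
        unfolding fa_def using True by simp
      have f1_eq: "(\<lambda>u. f1 U u) = (\<lambda>u. ennreal (of_bool (klms_choose K t (NN U) (SS U) u = 1)))"
        unfolding f1_def using True by simp
      show ?thesis unfolding fa_eq f1_eq G
        using True by (intro inner_ratio[OF K t a e x]) auto
    qed
  qed
  also have "\<dots> = Gk k x X * (\<integral>\<^sup>+U. (\<integral>\<^sup>+u. f1 U u \<partial>unif01) \<partial>PU)"
  proof (rule nn_integral_cmult)
    show "(\<lambda>U. \<integral>\<^sup>+u. f1 U u \<partial>unif01) \<in> borel_measurable PU"
    proof -
      interpret pu: prob_space unif01 by (rule pua)
      show ?thesis
        using f1m by (intro sigma_finite_measure.borel_measurable_nn_integral[OF pu.sigma_finite_measure_axioms]) simp
    qed
  qed
  also have "(\<integral>\<^sup>+U. (\<integral>\<^sup>+u. f1 U u \<partial>unif01) \<partial>PU) = (\<integral>\<^sup>+U. f1 U (U t) \<partial>PU)"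
    unfolding PU_def by (rule peel[OF pua, symmetric]) (use f1m in \<open>simp_all add: PU_def f1_def indepN\<close>)
  also have "(\<integral>\<^sup>+U. f1 U (U t) \<partial>PU) = (\<integral>\<^sup>+U. ennreal (of_bool (klms_arm K X U t = 1 \<and> fst (klms_hist K X U (t-1)) 1 = k)) \<partial>PU)"
    unfolding f1_def arm NN_def SS_def ..
  finally show ?thesis unfolding PU_def .
qed


lemma arm_measurable:
  assumes Xm[measurable]: "\<And>p. (\<lambda>\<omega>. Xf \<omega> p) \<in> borel_measurable M"
      and Um[measurable]: "\<And>s. (\<lambda>\<omega>. Uf \<omega> s) \<in> borel_measurable M"
      and t: "1 \<le> t"
  shows "(\<lambda>\<omega>. klms_arm K (Xf \<omega>) (Uf \<omega>) t) \<in> measurable M (count_space UNIV)"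
proof -
  note hm = hist_measurable[OF Xm Um, where K=K and t="t - 1"]
  have [measurable]: "\<And>b. (\<lambda>\<omega>. fst (klms_hist K (Xf \<omega>) (Uf \<omega>) (t - 1)) b) \<in> measurable M (count_space UNIV)"
    "\<And>b. (\<lambda>\<omega>. snd (klms_hist K (Xf \<omega>) (Uf \<omega>) (t - 1)) b) \<in> borel_measurable M" using hm by auto
  have e: "klms_arm K (Xf \<omega>) (Uf \<omega>) t = klms_choose K t (fst (klms_hist K (Xf \<omega>) (Uf \<omega>) (t - 1))) (snd (klms_hist K (Xf \<omega>) (Uf \<omega>) (t - 1))) (Uf \<omega> t)" for \<omega>
    unfolding klms_arm_def by (simp split: prod.splits)
  show ?thesis unfolding e by measurable
qed

lemma ind_measurable:
  assumes Xm[measurable]: "\<And>p. (\<lambda>\<omega>. Xf \<omega> p) \<in> borel_measurable M"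
      and Um[measurable]: "\<And>s. (\<lambda>\<omega>. Uf \<omega> s) \<in> borel_measurable M"
      and t: "1 \<le> t"
  shows "(\<lambda>\<omega>. ennreal (of_bool (klms_arm K (Xf \<omega>) (Uf \<omega>) t = a \<and>
           emp_max K (fst (klms_hist K (Xf \<omega>) (Uf \<omega>) (t - 1))) (snd (klms_hist K (Xf \<omega>) (Uf \<omega>) (t - 1))) < x \<and>
           P (fst (klms_hist K (Xf \<omega>) (Uf \<omega>) (t - 1)) 1)))) \<in> borel_measurable M"
    and "(\<lambda>\<omega>. ennreal (of_bool (klms_arm K (Xf \<omega>) (Uf \<omega>) t = a \<and> P (fst (klms_hist K (Xf \<omega>) (Uf \<omega>) (t - 1)) 1)))) \<in> borel_measurable M"
proof -
  note hm = hist_measurable[OF Xm Um, where K=K and t="t - 1"]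
  have [measurable]: "\<And>b. (\<lambda>\<omega>. fst (klms_hist K (Xf \<omega>) (Uf \<omega>) (t - 1)) b) \<in> measurable M (count_space UNIV)"
    "\<And>b. (\<lambda>\<omega>. snd (klms_hist K (Xf \<omega>) (Uf \<omega>) (t - 1)) b) \<in> borel_measurable M" using hm by auto
  have [measurable]: "(\<lambda>\<omega>. klms_arm K (Xf \<omega>) (Uf \<omega>) t) \<in> measurable M (count_space UNIV)"
    by (rule arm_measurable[OF Xm Um t])
  have m: "(\<lambda>\<omega>. fst (klms_hist K (Xf \<omega>) (Uf \<omega>) (t - 1)) 1) \<in> M \<rightarrow>\<^sub>M count_space UNIV" using hm by auto
  have [measurable]: "Measurable.pred M (\<lambda>\<omega>. P (fst (klms_hist K (Xf \<omega>) (Uf \<omega>) (t - 1)) 1))"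
    by (rule pred_sets1[OF _ m]) simp
  show "(\<lambda>\<omega>. ennreal (of_bool (klms_arm K (Xf \<omega>) (Uf \<omega>) t = a \<and>
           emp_max K (fst (klms_hist K (Xf \<omega>) (Uf \<omega>) (t - 1))) (snd (klms_hist K (Xf \<omega>) (Uf \<omega>) (t - 1))) < x \<and>
           P (fst (klms_hist K (Xf \<omega>) (Uf \<omega>) (t - 1)) 1)))) \<in> borel_measurable M"
    by measurable
  show "(\<lambda>\<omega>. ennreal (of_bool (klms_arm K (Xf \<omega>) (Uf \<omega>) t = a \<and> P (fst (klms_hist K (Xf \<omega>) (Uf \<omega>) (t - 1)) 1)))) \<in> borel_measurable M"
    by measurable
qed

lemma PU1_coord: "(\<lambda>U. U s) \<in> borel_measurable (PiM UNIV (\<lambda>_. unif01))"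
proof -
  have m: "(\<lambda>U. U s) \<in> PiM UNIV (\<lambda>_. unif01) \<rightarrow>\<^sub>M unif01"
    by (rule measurable_component_singleton) simp
  have e: "measurable (PiM UNIV (\<lambda>_. unif01)) unif01 = measurable (PiM UNIV (\<lambda>_. unif01)) borel"
    by (rule measurable_cong_sets[OF refl unif01_sets])
  show ?thesis using m unfolding e .
qed

lemma U_part:
  fixes x :: real
  assumes K: "2 \<le> K" and a: "a \<in> {2..K}" and x: "0 < x" "x < 1"
    and good: "\<And>b j. b \<in> {1..K} \<Longrightarrow> X (b, j) \<in> {0..1}"
  shows "(\<integral>\<^sup>+U. (\<Sum>t\<in>{K+1..T}. ennreal (of_bool (klms_arm K X U t = a \<and> emp_max K (fst (klms_hist K X U (t-1))) (snd (klms_hist K X U (t-1))) < x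
              \<and> fst (klms_hist K X U (t-1)) 1 = k))) \<partial>PiM UNIV (\<lambda>_. unif01)) \<le> Gk k x X"
proof -
  define PU where "PU = PiM (UNIV :: nat set) (\<lambda>_. unif01)"
  interpret PUp: prob_space PU unfolding PU_def by (intro prob_space_PiM prob_unif01)
  have Xm: "\<And>p. (\<lambda>U::nat\<Rightarrow>real. X p) \<in> borel_measurable PU" by simp
  have Um: "\<And>s. (\<lambda>U. U s) \<in> borel_measurable PU" unfolding PU_def by (rule PU1_coord)
  have ma: "(\<lambda>U. ennreal (of_bool (klms_arm K X U t = a \<and> emp_max K (fst (klms_hist K X U (t-1))) (snd (klms_hist K X U (t-1))) < x
              \<and> fst (klms_hist K X U (t-1)) 1 = k))) \<in> borel_measurable PU" if "t \<in> {K+1..T}" for t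
    using ind_measurable(1)[OF Xm Um, where t=t and K=K and a=a and x=x and P="\<lambda>n. n = k"] that by simp
  have m1: "(\<lambda>U. ennreal (of_bool (klms_arm K X U t = 1 \<and> fst (klms_hist K X U (t-1)) 1 = k))) \<in> borel_measurable PU"
    if "t \<in> {K+1..T}" for t
    using ind_measurable(2)[OF Xm Um, where t=t and K=K and a=1 and P="\<lambda>n. n = k"] that by simp
  have "(\<integral>\<^sup>+U. (\<Sum>t\<in>{K+1..T}. ennreal (of_bool (klms_arm K X U t = a \<and> emp_max K (fst (klms_hist K X U (t-1))) (snd (klms_hist K X U (t-1))) < x
              \<and> fst (klms_hist K X U (t-1)) 1 = k))) \<partial>PU)
      = (\<Sum>t\<in>{K+1..T}. (\<integral>\<^sup>+U. ennreal (of_bool (klms_arm K X U t = a \<and> emp_max K (fst (klms_hist K X U (t-1))) (snd (klms_hist K X U (t-1))) < x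
              \<and> fst (klms_hist K X U (t-1)) 1 = k)) \<partial>PU))"
    by (rule nn_integral_sum) (rule ma)
  also have "\<dots> \<le> (\<Sum>t\<in>{K+1..T}. Gk k x X * (\<integral>\<^sup>+U. ennreal (of_bool (klms_arm K X U t = 1 \<and> fst (klms_hist K X U (t-1)) 1 = k)) \<partial>PU))"
  proof (rule sum_mono)
    fix t assume "t \<in> {K+1..T}"
    then show "(\<integral>\<^sup>+U. ennreal (of_bool (klms_arm K X U t = a \<and> emp_max K (fst (klms_hist K X U (t-1))) (snd (klms_hist K X U (t-1))) < x
              \<and> fst (klms_hist K X U (t-1)) 1 = k)) \<partial>PU)
        \<le> Gk k x X * (\<integral>\<^sup>+U. ennreal (of_bool (klms_arm K X U t = 1 \<and> fst (klms_hist K X U (t-1)) 1 = k)) \<partial>PU)"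
      unfolding PU_def by (intro per_t_bound) (use K a x good in auto)
  qed
  also have "\<dots> = Gk k x X * (\<Sum>t\<in>{K+1..T}. (\<integral>\<^sup>+U. ennreal (of_bool (klms_arm K X U t = 1 \<and> fst (klms_hist K X U (t-1)) 1 = k)) \<partial>PU))"
    by (rule sum_distrib_left[symmetric])
  also have "\<dots> \<le> Gk k x X * 1"
  proof (rule mult_left_mono)
    have "(\<Sum>t\<in>{K+1..T}. (\<integral>\<^sup>+U. ennreal (of_bool (klms_arm K X U t = 1 \<and> fst (klms_hist K X U (t-1)) 1 = k)) \<partial>PU))
        = (\<integral>\<^sup>+U. (\<Sum>t\<in>{K+1..T}. ennreal (of_bool (klms_arm K X U t = 1 \<and> fst (klms_hist K X U (t-1)) 1 = k))) \<partial>PU)"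
      by (rule nn_integral_sum[symmetric]) (rule m1)
    also have "\<dots> \<le> (\<integral>\<^sup>+U. 1 \<partial>PU)"
      by (intro nn_integral_mono at_most_one_pull) auto
    also have "\<dots> = 1" by (simp add: PUp.emeasure_space_1)
    finally show "(\<Sum>t\<in>{K+1..T}. (\<integral>\<^sup>+U. ennreal (of_bool (klms_arm K X U t = 1 \<and> fst (klms_hist K X U (t-1)) 1 = k)) \<partial>PU)) \<le> 1" .
  qed simp
  finally show ?thesis unfolding PU_def by simp
qed


lemma X_part:
  fixes K T a k :: nat and \<nu> :: "nat \<Rightarrow> real measure" and \<mu> :: "nat \<Rightarrow> real" and \<epsilon>\<^sub>2 :: real
  assumes K2: "K \<ge> 2"
    and prob: "\<And>i. i \<in> {1..K} \<Longrightarrow> prob_space (\<nu> i)"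
    and sets: "\<And>i. i \<in> {1..K} \<Longrightarrow> sets (\<nu> i) = sets borel"
    and AE01: "\<And>i. i \<in> {1..K} \<Longrightarrow> (AE x in \<nu> i. x \<in> {0..1})"
    and mean: "\<And>i. i \<in> {1..K} \<Longrightarrow> \<mu> i = (\<integral>x. x \<partial>\<nu> i)"
    and a: "a \<in> {1..K}" "\<mu> a < \<mu> 1"
    and eps: "0 < \<epsilon>\<^sub>2" "\<epsilon>\<^sub>2 < \<mu> 1 - \<mu> a"
    and k: "0 < k"
  shows "(\<integral>\<^sup>+\<omega>. (\<Sum>t\<in>{K+1..T}. ennreal (of_bool (klms_arm K (fst \<omega>) (snd \<omega>) t = a
            \<and> emp_max K (fst (klms_hist K (fst \<omega>) (snd \<omega>) (t - 1))) (snd (klms_hist K (fst \<omega>) (snd \<omega>) (t - 1))) < \<mu> 1 - \<epsilon>\<^sub>2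
            \<and> fst (klms_hist K (fst \<omega>) (snd \<omega>) (t - 1)) 1 = k))) \<partial>bandit_space K \<nu>)
     \<le> ennreal ((2 * H_const (\<mu> 1) \<epsilon>\<^sub>2 / real k + 1) * exp_neg (real k) (kl (\<mu> 1 - \<epsilon>\<^sub>2) (\<mu> 1)))"
proof -
  define x where "x = \<mu> 1 - \<epsilon>\<^sub>2"
  define MX where "MX = (\<lambda>p::nat\<times>nat. if fst p \<in> {1..K} then \<nu> (fst p) else return borel 0)"
  define PX where "PX = PiM UNIV MX"
  define PU where "PU = PiM (UNIV :: nat set) (\<lambda>_. unif01)"
  have BS: "bandit_space K \<nu> = PX \<Otimes>\<^sub>M PU"
    unfolding bandit_space_def PX_def PU_def MX_def unif01_def by simp
  have K1: "1 \<in> {1..K}" using K2 by simp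
  have MXp: "prob_space (MX p)" for p
    unfolding MX_def using prob by (auto intro!: prob_space_return)
  have MXs: "sets (MX p) = sets borel" for p
    unfolding MX_def using sets by auto
  interpret PXp: prob_space PX unfolding PX_def by (intro prob_space_PiM MXp)
  interpret PUp: prob_space PU unfolding PU_def by (intro prob_space_PiM prob_unif01)
  interpret A1: arm_dist "\<nu> 1" "\<mu> 1"
    by (rule arm_dist.intro[OF prob[OF K1] sets[OF K1] AE01[OF K1] mean[OF K1]])
  interpret Aa: arm_dist "\<nu> a" "\<mu> a"
    by (rule arm_dist.intro[OF prob[OF a(1)] sets[OF a(1)] AE01[OF a(1)] mean[OF a(1)]])
  have x0: "0 < x" unfolding x_def using eps Aa.mu_01 by simp
  have x1: "x < \<mu> 1" unfolding x_def using eps by simp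
  have xx1: "x < 1" using x1 A1.mu_01 by simp
  have a2: "a \<in> {2..K}" using a by (cases "a = 1") auto
  have Xm: "(\<lambda>\<omega>. fst \<omega> p) \<in> borel_measurable (PX \<Otimes>\<^sub>M PU)" for p
  proof -
    have m: "(\<lambda>\<omega>. fst \<omega> p) \<in> PX \<Otimes>\<^sub>M PU \<rightarrow>\<^sub>M MX p"
      unfolding PX_def by (rule measurable_compose[OF measurable_fst measurable_component_singleton]) simp
    have e: "measurable (PX \<Otimes>\<^sub>M PU) (MX p) = measurable (PX \<Otimes>\<^sub>M PU) borel"
      by (rule measurable_cong_sets[OF refl MXs])
    show ?thesis using m unfolding e .
  qed
  have Um: "(\<lambda>\<omega>. snd \<omega> s) \<in> borel_measurable (PX \<Otimes>\<^sub>M PU)" for s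
  proof -
    have m: "(\<lambda>\<omega>. snd \<omega> s) \<in> PX \<Otimes>\<^sub>M PU \<rightarrow>\<^sub>M unif01"
      unfolding PU_def by (rule measurable_compose[OF measurable_snd measurable_component_singleton]) simp
    have e: "measurable (PX \<Otimes>\<^sub>M PU) unif01 = measurable (PX \<Otimes>\<^sub>M PU) borel"
      by (rule measurable_cong_sets[OF refl unif01_sets])
    show ?thesis using m unfolding e .
  qed
  define F where "F = (\<lambda>\<omega>::(nat\<times>nat\<Rightarrow>real)\<times>(nat\<Rightarrow>real). (\<Sum>t\<in>{K+1..T}. ennreal (of_bool (klms_arm K (fst \<omega>) (snd \<omega>) t = a
            \<and> emp_max K (fst (klms_hist K (fst \<omega>) (snd \<omega>) (t - 1))) (snd (klms_hist K (fst \<omega>) (snd \<omega>) (t - 1))) < x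
            \<and> fst (klms_hist K (fst \<omega>) (snd \<omega>) (t - 1)) 1 = k))))"
  have Fm: "F \<in> borel_measurable (PX \<Otimes>\<^sub>M PU)"
    unfolding F_def
  proof (rule borel_measurable_sum)
    fix t assume t: "t \<in> {K+1..T}"
    have t1: "1 \<le> t" using t by simp
    show "(\<lambda>\<omega>. ennreal (of_bool (klms_arm K (fst \<omega>) (snd \<omega>) t = a
            \<and> emp_max K (fst (klms_hist K (fst \<omega>) (snd \<omega>) (t - 1))) (snd (klms_hist K (fst \<omega>) (snd \<omega>) (t - 1))) < x
            \<and> fst (klms_hist K (fst \<omega>) (snd \<omega>) (t - 1)) 1 = k))) \<in> borel_measurable (PX \<Otimes>\<^sub>M PU)"
      by (rule ind_measurable(1)[OF Xm Um t1, where K=K and a=a and x=x and P="\<lambda>n. n = k"])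
  qed
  have good: "AE X in PX. \<forall>p. fst p \<in> {1..K} \<longrightarrow> X p \<in> {0..1}"
  proof (subst AE_all_countable, intro allI)
    fix p :: "nat \<times> nat"
    show "AE X in PX. fst p \<in> {1..K} \<longrightarrow> X p \<in> {0..1}"
    proof (cases "fst p \<in> {1..K}")
      case True
      have "AE y in MX p. y \<in> {0..1}" unfolding MX_def using True AE01 by simp
      then have "AE X in PX. X p \<in> {0..1}" unfolding PX_def by (intro AE_PiM_component MXp) auto
      then show ?thesis by (rule AE_mp) (intro AE_I2 impI)
    next
      case False
      show ?thesis by (intro AE_I2 impI) (use False in blast)
    qed
  qed
  have "(\<integral>\<^sup>+\<omega>. F \<omega> \<partial>(PX \<Otimes>\<^sub>M PU)) = (\<integral>\<^sup>+X. (\<integral>\<^sup>+U. F (X, U) \<partial>PU) \<partial>PX)"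
    by (rule sigma_finite_measure.nn_integral_fst[OF PUp.sigma_finite_measure_axioms Fm, symmetric])
  also have "\<dots> \<le> (\<integral>\<^sup>+X. Gk k x X \<partial>PX)"
    using good
  proof (intro nn_integral_mono_AE, eventually_elim)
    case (elim X)
    then have gX: "\<And>b j. b \<in> {1..K} \<Longrightarrow> X (b, j) \<in> {0..1}" by auto
    show ?case unfolding F_def PU_def using U_part[where X=X and T=T and k=k, OF K2 a2 x0 xx1 gX] by simp
  qed
  also have "(\<integral>\<^sup>+X. Gk k x X \<partial>PX) = (\<integral>\<^sup>+\<omega>. (if 0 \<le> (\<Sum>s<k. \<omega> s) / real k \<and> (\<Sum>s<k. \<omega> s) / real k < x
              then ennreal (exp (real k * klr ((\<Sum>s<k. \<omega> s) / real k) x)) else 0) \<partial>A1.Q k)"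
  proof -
    define \<psi> where "\<psi> = (\<lambda>\<omega>::nat\<Rightarrow>real. (if 0 \<le> (\<Sum>s<k. \<omega> s) / real k \<and> (\<Sum>s<k. \<omega> s) / real k < x
              then ennreal (exp (real k * klr ((\<Sum>s<k. \<omega> s) / real k) x)) else 0))"
    have Q: "A1.Q k = PiM {..<k} (\<lambda>i. MX (1, i))"
      unfolding A1.Q_def MX_def using K1 by (intro PiM_cong) auto
    have D: "distr PX (A1.Q k) (\<lambda>\<omega>. \<lambda>n\<in>{..<k}. \<omega> (1, n)) = A1.Q k"
      unfolding Q PX_def by (rule distr_PiM_reindex) (auto intro: MXp inj_onI)
    have Tm: "(\<lambda>\<omega>. \<lambda>n\<in>{..<k}. \<omega> (1, n)) \<in> PX \<rightarrow>\<^sub>M A1.Q k"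
      unfolding Q PX_def by (intro measurable_restrict measurable_component_singleton) auto
    have psim: "\<psi> \<in> borel_measurable (A1.Q k)" unfolding \<psi>_def by (rule A1.psi_meas)
    have eq: "Gk k x X = \<psi> (\<lambda>n\<in>{..<k}. X (1, n))" for X
    proof -
      have "(\<Sum>s<k. (\<lambda>n\<in>{..<k}. X (1, n)) s) = (\<Sum>s<k. X (1, s))" by (intro sum.cong) auto
      then show ?thesis unfolding Gk_def \<psi>_def by simp
    qed
    have "(\<integral>\<^sup>+X. Gk k x X \<partial>PX) = (\<integral>\<^sup>+X. \<psi> (\<lambda>n\<in>{..<k}. X (1, n)) \<partial>PX)" unfolding eq ..
    also have "\<dots> = (\<integral>\<^sup>+\<omega>. \<psi> \<omega> \<partial>distr PX (A1.Q k) (\<lambda>\<omega>. \<lambda>n\<in>{..<k}. \<omega> (1, n)))"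
      by (rule nn_integral_distr[symmetric, OF Tm]) (simp only: measurable_distr_eq1 psim)
    also have "\<dots> = (\<integral>\<^sup>+\<omega>. \<psi> \<omega> \<partial>A1.Q k)" unfolding D ..
    finally show ?thesis unfolding \<psi>_def .
  qed
  also have "\<dots> \<le> ennreal ((2 * H_const (\<mu> 1) (\<mu> 1 - x) / real k + 1) * exp_neg (real k) (kl x (\<mu> 1)))"
    by (rule A1.analytic[OF x0 x1 k])
  finally have R: "(\<integral>\<^sup>+\<omega>. F \<omega> \<partial>(PX \<Otimes>\<^sub>M PU)) \<le> ennreal ((2 * H_const (\<mu> 1) (\<mu> 1 - x) / real k + 1) * exp_neg (real k) (kl x (\<mu> 1)))" .
  have e: "\<mu> 1 - x = \<epsilon>\<^sub>2" unfolding x_def by simp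
  show ?thesis using R[unfolded e] unfolding BS F_def x_def .
qed


lemma bs_coord:
  assumes sets: "\<And>i. i \<in> {1..K} \<Longrightarrow> sets (\<nu> i) = sets borel"
  shows "(\<lambda>\<omega>. fst \<omega> p) \<in> borel_measurable (bandit_space K \<nu>)"
    and "(\<lambda>\<omega>. snd \<omega> s) \<in> borel_measurable (bandit_space K \<nu>)"
proof -
  define MX where "MX = (\<lambda>p::nat\<times>nat. if fst p \<in> {1..K} then \<nu> (fst p) else return borel 0)"
  define PX where "PX = PiM UNIV MX"
  define PU where "PU = PiM (UNIV :: nat set) (\<lambda>_. unif01)"
  have BS: "bandit_space K \<nu> = PX \<Otimes>\<^sub>M PU"
    unfolding bandit_space_def PX_def PU_def MX_def unif01_def by simp
  have MXs: "sets (MX p) = sets borel" for p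
    unfolding MX_def using sets by auto
  have m: "(\<lambda>\<omega>. fst \<omega> p) \<in> PX \<Otimes>\<^sub>M PU \<rightarrow>\<^sub>M MX p"
    unfolding PX_def by (rule measurable_compose[OF measurable_fst measurable_component_singleton]) simp
  have e: "measurable (PX \<Otimes>\<^sub>M PU) (MX p) = measurable (PX \<Otimes>\<^sub>M PU) borel"
    by (rule measurable_cong_sets[OF refl MXs])
  show "(\<lambda>\<omega>. fst \<omega> p) \<in> borel_measurable (bandit_space K \<nu>)" using m unfolding e BS .
  have m2: "(\<lambda>\<omega>. snd \<omega> s) \<in> PX \<Otimes>\<^sub>M PU \<rightarrow>\<^sub>M unif01"
    unfolding PU_def by (rule measurable_compose[OF measurable_snd measurable_component_singleton]) simp
  have e2: "measurable (PX \<Otimes>\<^sub>M PU) unif01 = measurable (PX \<Otimes>\<^sub>M PU) borel"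
    by (rule measurable_cong_sets[OF refl unif01_sets])
  show "(\<lambda>\<omega>. snd \<omega> s) \<in> borel_measurable (bandit_space K \<nu>)" using m2 unfolding e2 BS .
qed

theorem lemma7:
  fixes K T a :: nat and \<nu> :: "nat \<Rightarrow> real measure" and \<mu> :: "nat \<Rightarrow> real"
    and \<epsilon>\<^sub>2 :: real and m n :: enat
  assumes "K \<ge> 2"
    and "\<And>i. i \<in> {1..K} \<Longrightarrow> prob_space (\<nu> i)"
    and "\<And>i. i \<in> {1..K} \<Longrightarrow> sets (\<nu> i) = sets borel"
    and "\<And>i. i \<in> {1..K} \<Longrightarrow> (AE x in \<nu> i. x \<in> {0..1})"
    and "\<And>i. i \<in> {1..K} \<Longrightarrow> \<mu> i = (\<integral>x. x \<partial>\<nu> i)"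
    and "\<And>i j. 1 \<le> i \<Longrightarrow> i \<le> j \<Longrightarrow> j \<le> K \<Longrightarrow> \<mu> j \<le> \<mu> i"
    and "a \<in> {1..K}" and "\<mu> a < \<mu> 1"
    and "0 < \<epsilon>\<^sub>2" and "\<epsilon>\<^sub>2 < \<mu> 1 - \<mu> a"
    and "m \<le> n"
  shows "(\<integral>\<^sup>+\<omega>. (\<Sum>t\<in>{K+1..T}. ennreal (of_bool (
              klms_arm K (fst \<omega>) (snd \<omega>) t = a
            \<and> emp_max K (fst (klms_hist K (fst \<omega>) (snd \<omega>) (t - 1)))
                        (snd (klms_hist K (fst \<omega>) (snd \<omega>) (t - 1))) < \<mu> 1 - \<epsilon>\<^sub>2
            \<and> m < enat (fst (klms_hist K (fst \<omega>) (snd \<omega>) (t - 1)) 1)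
            \<and> enat (fst (klms_hist K (fst \<omega>) (snd \<omega>) (t - 1)) 1) \<le> n)))
          \<partial>bandit_space K \<nu>)
       \<le> (\<Sum>k. ennreal (if m < enat k \<and> enat k \<le> n
               then (2 * H_const (\<mu> 1) \<epsilon>\<^sub>2 / real k + 1)
                    * exp_neg (real k) (kl (\<mu> 1 - \<epsilon>\<^sub>2) (\<mu> 1))
               else 0))"
proof -
  note A = assms
  define C where "C = (\<lambda>\<omega> t. klms_arm K (fst \<omega>) (snd \<omega>) t = a
            \<and> emp_max K (fst (klms_hist K (fst \<omega>) (snd \<omega>) (t - 1)))
                        (snd (klms_hist K (fst \<omega>) (snd \<omega>) (t - 1))) < \<mu> 1 - \<epsilon>\<^sub>2)"
  define N where "N = (\<lambda>\<omega> t. fst (klms_hist K (fst \<omega>) (snd \<omega>) (t - 1)) 1)"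
  define c where "c = (\<lambda>k::nat. if m < enat k \<and> enat k \<le> n then 1 else (0::ennreal))"
  define g where "g = (\<lambda>k \<omega>. (\<Sum>t\<in>{K+1..T}. ennreal (of_bool (C \<omega> t \<and> N \<omega> t = k))))"
  have Xm: "\<And>p. (\<lambda>\<omega>. fst \<omega> p) \<in> borel_measurable (bandit_space K \<nu>)" using bs_coord(1)[OF A(3)] .
  have Um: "\<And>s. (\<lambda>\<omega>. snd \<omega> s) \<in> borel_measurable (bandit_space K \<nu>)" using bs_coord(2)[OF A(3)] .
  have gm: "g k \<in> borel_measurable (bandit_space K \<nu>)" for k
    unfolding g_def
  proof (rule borel_measurable_sum)
    fix t assume t: "t \<in> {K+1..T}"
    have t1: "1 \<le> t" using t by simp
    show "(\<lambda>\<omega>. ennreal (of_bool (C \<omega> t \<and> N \<omega> t = k))) \<in> borel_measurable (bandit_space K \<nu>)"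
      unfolding C_def N_def conj_assoc
      by (rule ind_measurable(1)[OF Xm Um t1, where K=K and a=a and x="\<mu> 1 - \<epsilon>\<^sub>2" and P="\<lambda>n. n = k"])
  qed
  have pw1: "ennreal (of_bool (C \<omega> t \<and> m < enat (N \<omega> t) \<and> enat (N \<omega> t) \<le> n))
      = (\<Sum>k. c k * ennreal (of_bool (C \<omega> t \<and> N \<omega> t = k)))" for \<omega> t
  proof -
    have "(\<lambda>k. c k * ennreal (of_bool (C \<omega> t \<and> N \<omega> t = k))) = (\<lambda>k. if k = N \<omega> t then c (N \<omega> t) * ennreal (of_bool (C \<omega> t)) else 0)"
      by (auto simp: fun_eq_iff)
    then have "(\<Sum>k. c k * ennreal (of_bool (C \<omega> t \<and> N \<omega> t = k))) = c (N \<omega> t) * ennreal (of_bool (C \<omega> t))"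
      using sums_single[of "N \<omega> t" "\<lambda>_. c (N \<omega> t) * ennreal (of_bool (C \<omega> t))"] sums_unique by fastforce
    then show ?thesis unfolding c_def by simp
  qed
  have pw: "(\<Sum>t\<in>{K+1..T}. ennreal (of_bool (C \<omega> t \<and> m < enat (N \<omega> t) \<and> enat (N \<omega> t) \<le> n)))
      = (\<Sum>k. c k * g k \<omega>)" for \<omega>
  proof -
    have "(\<Sum>t\<in>{K+1..T}. ennreal (of_bool (C \<omega> t \<and> m < enat (N \<omega> t) \<and> enat (N \<omega> t) \<le> n)))
        = (\<Sum>t\<in>{K+1..T}. \<Sum>k. c k * ennreal (of_bool (C \<omega> t \<and> N \<omega> t = k)))" unfolding pw1 ..
    also have "\<dots> = (\<Sum>k. \<Sum>t\<in>{K+1..T}. c k * ennreal (of_bool (C \<omega> t \<and> N \<omega> t = k)))"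
      by (rule suminf_sum[symmetric]) simp
    also have "\<dots> = (\<Sum>k. c k * g k \<omega>)" unfolding g_def by (simp only: sum_distrib_left)
    finally show ?thesis .
  qed
  have "(\<integral>\<^sup>+\<omega>. (\<Sum>t\<in>{K+1..T}. ennreal (of_bool (C \<omega> t \<and> m < enat (N \<omega> t) \<and> enat (N \<omega> t) \<le> n))) \<partial>bandit_space K \<nu>)
      = (\<integral>\<^sup>+\<omega>. (\<Sum>k. c k * g k \<omega>) \<partial>bandit_space K \<nu>)" unfolding pw ..
  also have "\<dots> = (\<Sum>k. (\<integral>\<^sup>+\<omega>. c k * g k \<omega> \<partial>bandit_space K \<nu>))"
    by (rule nn_integral_suminf) (use gm in simp)
  also have "\<dots> = (\<Sum>k. c k * (\<integral>\<^sup>+\<omega>. g k \<omega> \<partial>bandit_space K \<nu>))"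
    by (intro suminf_cong nn_integral_cmult gm)
  also have "\<dots> \<le> (\<Sum>k. ennreal (if m < enat k \<and> enat k \<le> n
               then (2 * H_const (\<mu> 1) \<epsilon>\<^sub>2 / real k + 1) * exp_neg (real k) (kl (\<mu> 1 - \<epsilon>\<^sub>2) (\<mu> 1)) else 0))"
  proof (rule suminf_le)
    fix k
    show "c k * (\<integral>\<^sup>+\<omega>. g k \<omega> \<partial>bandit_space K \<nu>) \<le> ennreal (if m < enat k \<and> enat k \<le> n
               then (2 * H_const (\<mu> 1) \<epsilon>\<^sub>2 / real k + 1) * exp_neg (real k) (kl (\<mu> 1 - \<epsilon>\<^sub>2) (\<mu> 1)) else 0)"
    proof (cases "m < enat k \<and> enat k \<le> n")
      case False
      then have "c k = 0" unfolding c_def by auto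
      then show ?thesis using False by simp
    next
      case True
      then have k0: "0 < k" by (cases k) (auto simp: zero_enat_def[symmetric])
      have "(\<integral>\<^sup>+\<omega>. g k \<omega> \<partial>bandit_space K \<nu>) \<le> ennreal ((2 * H_const (\<mu> 1) \<epsilon>\<^sub>2 / real k + 1) * exp_neg (real k) (kl (\<mu> 1 - \<epsilon>\<^sub>2) (\<mu> 1)))"
        unfolding g_def C_def N_def conj_assoc
        by (rule X_part[OF A(1-5) A(7) A(8) A(9) A(10) k0])
      then show ?thesis using True unfolding c_def by simp
    qed
  qed auto
  finally show ?thesis unfolding C_def N_def conj_assoc .
qed

end
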